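(* For integers $k,r,n\ge1$ let $$I_{k,r,n}=\int_{\Delta_{k-1}}\Big(\sum_{1\le s\le k}\frac{x_s}{s}\Big)^n d\nu_{k,r}(x).$$ Then: (a) $I_{k,r,n}=\sum_{1\le s_1,\dots,s_n\le k}\frac{1}{s_1s_2\cdots s_n}\cdot\frac{(kr-1)!}{(r-1)!^k}\cdot\frac{\prod_{1\le i\le k}(r-1+\beta_i)!}{(kr+n-1)!}$, where $\beta_i=\beta_i(s)=\#\{j:s_j=i\}$. (b) The quotient $I_{k,r,n}\Big/\Big(\frac{r^n}{kr(kr+1)\cdots(kr+n-1)}\big(1+\frac12+\dots+\frac1k\big)^n\Big)$ is bounded below by $1$ and above by $1+\frac13\sum_{m=2}^n\frac{2^m n!}{(n-m)!}\big(1+\frac12+\dots+\frac1k\big)^{-m}=1+O((\log k)^{-2})$. (c) Consequently $I_{k,r,n}=\frac1{k^n}\Big(\big(1+\frac12+\dots+\frac1k\big)^n+O((\log k)^{n-2})\Big)=\frac{(\log k+\gamma)^n+O((\log k)^{n-2})}{k^n}$ as $k\to\infty$, where $\gamma$ is the Euler–Mascheroni constant (the $O$ constants depending on $n,r$).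
   Context: $\Delta_{k-1}=\{x\in\mathbb R^k:x_s\ge0,\ \sum_sx_s=1\}$ with $dx=dx_1\wedge\dots\wedge dx_{k-1}$, and $d\nu_{k,r}(x)=(kr-1)!\,\frac{(x_1\cdots x_k)^{r-1}}{(r-1)!^k}\,dx$, a probability measure on $\Delta_{k-1}$. *)

theory Defs
  imports "HOL-Analysis.Analysis" "HOL-Library.Landau_Symbols"
begin

text \<open>Coordinates: a point of the simplex is parametrised by its first k-1 coordinates
  y 1, ..., y (k-1) (the chart used for dx = dx_1 ... dx_(k-1)); the last coordinate is
  x_k = 1 - (x_1 + ... + x_(k-1)).\<close>

definition simplex_pt :: "nat \<Rightarrow> (nat \<Rightarrow> real) \<Rightarrow> nat \<Rightarrow> real" where
  "simplex_pt k y = (\<lambda>s. if s = k then 1 - (\<Sum>i\<in>{1..<k}. y i) else y s)"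

definition chart_measure :: "nat \<Rightarrow> (nat \<Rightarrow> real) measure" where
  "chart_measure k = PiM {1..<k} (\<lambda>_. lborel)"

definition simplex_chart :: "nat \<Rightarrow> (nat \<Rightarrow> real) set" where
  "simplex_chart k = {y \<in> space (chart_measure k). \<forall>s\<in>{1..k}. simplex_pt k y s \<ge> 0}"

definition nu :: "nat \<Rightarrow> nat \<Rightarrow> (nat \<Rightarrow> real) measure" where
  "nu k r = density (chart_measure k)
     (\<lambda>y. ennreal (indicator (simplex_chart k) y * (fact (k*r - 1) / fact (r - 1) ^ k)
                   * (\<Prod>s\<in>{1..k}. simplex_pt k y s ^ (r - 1))))"

definition I_krn :: "nat \<Rightarrow> nat \<Rightarrow> nat \<Rightarrow> real" where
  "I_krn k r n = integral\<^sup>L (nu k r) (\<lambda>y. (\<Sum>s\<in>{1..k}. simplex_pt k y s / real s) ^ n)"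

definition beta_count :: "nat \<Rightarrow> (nat \<Rightarrow> nat) \<Rightarrow> nat \<Rightarrow> nat" where
  "beta_count n s i = card {j \<in> {1..n}. s j = i}"

definition upper_bound :: "nat \<Rightarrow> nat \<Rightarrow> real" where
  "upper_bound k n = 1 + 1/3 * (\<Sum>m\<in>{2..n}. 2 ^ m * fact n / fact (n - m) / harm k ^ m)"

end

theory Submission
  imports Defs
begin


lemma beta01:
  fixes c b :: nat
  shows "(\<integral>\<^sup>+y. ennreal (indicator {0..1} y * (y^c * (1-y)^b)) \<partial>lborel)
         = ennreal (fact c * fact b / fact (c+b+1))"
proof -
  have h: "((\<lambda>t. t powr (real (c+1) - 1) * (1 - t) powr (real (b+1) - 1)) has_integral Beta (real (c+1)) (real (b+1))) {0..1}"
    by (rule has_integral_Beta_real) auto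
  have h2: "((\<lambda>t::real. t^c * (1-t)^b) has_integral Beta (real (c+1)) (real (b+1))) {0..1}"
  proof (rule has_integral_spike_finite_eq[THEN iffD1, OF _ _ h])
    show "finite {0,1::real}" by simp
    fix x :: real assume "x \<in> {0..1} - {0,1}"
    then have "0 < x" "x < 1" by auto
    then show "x^c * (1-x)^b = x powr (real (c+1) - 1) * (1 - x) powr (real (b+1) - 1)"
      by (simp add: powr_realpow)
  qed
  have B: "Beta (real (c+1)) (real (b+1)) = fact c * fact b / fact (c+b+1)"
    proof -
    have "Gamma (real (c+1)) = fact c" "Gamma (real (b+1)) = fact b"
         "Gamma (real (c+1) + real (b+1)) = fact (c+b+1)"
      using Gamma_fact[of c, where 'a=real] Gamma_fact[of b, where 'a=real] Gamma_fact[of "c+b+1", where 'a=real]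
      by (simp_all add: add_ac)
    then show ?thesis unfolding Beta_def by simp
  qed
  have "(\<integral>\<^sup>+y. ennreal (indicator {0..1} y * (y^c * (1-y)^b)) \<partial>lborel) = ennreal (Beta (real (c+1)) (real (b+1)))"
    by (rule nn_integral_has_integral_lebesgue[OF _ h2]) auto
  then show ?thesis using B by simp
qed

lemma beta_u:
  fixes c b :: nat and u :: real
  assumes u: "u \<ge> 0"
  shows "(\<integral>\<^sup>+y. ennreal (indicator {0..u} y * (y^c * (u-y)^b)) \<partial>lborel)
         = ennreal (u^(c+b+1) * fact c * fact b / fact (c+b+1))"
proof (cases "u = 0")
  case True
  have "(\<integral>\<^sup>+y. ennreal (indicator {0..u} y * (y^c * (u-y)^b)) \<partial>lborel) = (\<integral>\<^sup>+(y::real). 0 \<partial>lborel)"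
  proof (rule nn_integral_cong_AE)
    show "AE y in lborel. ennreal (indicator {0..u} y * (y^c * (u-y)^b)) = 0"
      using AE_lborel_singleton[of "0::real"] by eventually_elim (use True in \<open>auto simp: indicator_def\<close>)
  qed
  then show ?thesis using True by simp
next
  case False
  with u have u: "u > 0" by simp
  have m: "(\<lambda>y. ennreal (indicator {0..u} y * (y^c * (u-y)^b))) \<in> borel_measurable borel"
    by measurable
  have "(\<integral>\<^sup>+y. ennreal (indicator {0..u} y * (y^c * (u-y)^b)) \<partial>lborel)
      = ennreal \<bar>u\<bar> * (\<integral>\<^sup>+x. ennreal (indicator {0..u} (0 + u*x) * ((0 + u*x)^c * (u-(0 + u*x))^b)) \<partial>lborel)"
    by (rule nn_integral_real_affine[OF m]) (use u in simp)
  also have "(\<lambda>x. ennreal (indicator {0..u} (0 + u*x) * ((0 + u*x)^c * (u-(0 + u*x))^b)))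
      = (\<lambda>x. ennreal (u^(c+b)) * ennreal (indicator {0..1} x * (x^c * (1-x)^b)))"
  proof
    fix x
    have i: "indicator {0..u} (0 + u*x) = (indicator {0..1} x :: real)"
      using u by (auto simp: indicator_def zero_le_mult_iff mult_le_cancel_left1)
    have "(u*x)^c * (u - u*x)^b = u^(c+b) * (x^c * (1-x)^b)"
    proof -
      have "u - u*x = u * (1-x)" by (simp add: algebra_simps)
      then show ?thesis by (simp add: power_add power_mult_distrib mult_ac)
    qed
    then show "ennreal (indicator {0..u} (0 + u*x) * ((0 + u*x)^c * (u-(0 + u*x))^b))
      = ennreal (u^(c+b)) * ennreal (indicator {0..1} x * (x^c * (1-x)^b))"
      using u i by (simp add: ennreal_mult'[symmetric] mult_ac)
  qed
  also have "ennreal \<bar>u\<bar> * (\<integral>\<^sup>+x. ennreal (u^(c+b)) * ennreal (indicator {0..1} x * (x^c * (1-x)^b)) \<partial>lborel)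
     = ennreal \<bar>u\<bar> * (ennreal (u^(c+b)) * ennreal (fact c * fact b / fact (c+b+1)))"
    by (subst nn_integral_cmult) (auto simp: beta01)
  also have "\<dots> = ennreal (u^(c+b+1) * fact c * fact b / fact (c+b+1))"
    using u by (simp add: ennreal_mult[symmetric] mult_ac)
  finally show ?thesis .
qed


definition hpow :: "nat \<Rightarrow> real \<Rightarrow> real" where
  "hpow c z = (if 0 \<le> z then z ^ c else 0)"

lemma hpow_nonneg[simp]: "0 \<le> hpow c z" by (simp add: hpow_def)

lemma hpow_meas[measurable]: "hpow c \<in> borel_measurable borel"
  unfolding hpow_def by measurable

interpretation pl: product_sigma_finite "(\<lambda>_::nat. lborel :: real measure)"
  by standard

lemma inner_beta:
  fixes c b :: nat and s :: real
  shows "(\<integral>\<^sup>+y. ennreal (hpow c y * hpow b (s - y)) \<partial>lborel)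
         = ennreal (hpow (c+b+1) s * (fact c * fact b / fact (c+b+1)))"
proof (cases "s \<ge> 0")
  case True
  have "(\<lambda>y. ennreal (hpow c y * hpow b (s - y))) = (\<lambda>y. ennreal (indicator {0..s} y * (y^c * (s-y)^b)))"
    by (auto simp: hpow_def indicator_def fun_eq_iff)
  then show ?thesis using beta_u[OF True, of c b] True by (simp add: hpow_def mult_ac)
next
  case False
  have "(\<lambda>y. ennreal (hpow c y * hpow b (s - y))) = (\<lambda>y. 0)"
    using False by (auto simp: hpow_def fun_eq_iff)
  then show ?thesis using False by (simp add: hpow_def)
qed

lemma dirichlet:
  fixes I :: "nat set"
  assumes "finite I"
  shows "\<And>b t. (\<integral>\<^sup>+y. ennreal ((\<Prod>j\<in>I. hpow (a j) (y j)) * hpow b (t - (\<Sum>j\<in>I. y j))) \<partial>PiM I (\<lambda>_. lborel))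
     = ennreal (hpow (sum a I + b + card I) t * ((\<Prod>j\<in>I. fact (a j)) * fact b / fact (sum a I + b + card I)))"
  using assms
proof (induction I rule: finite_induct)
  case empty
  show ?case by (simp add: PiM_empty nn_integral_count_space_finite)
next
  case (insert i I)
  have m: "(\<lambda>y. ennreal ((\<Prod>j\<in>insert i I. hpow (a j) (y j)) * hpow b (t - (\<Sum>j\<in>insert i I. y j))))
      \<in> borel_measurable (PiM (insert i I) (\<lambda>_. lborel))"
    by measurable
  have "(\<integral>\<^sup>+y. ennreal ((\<Prod>j\<in>insert i I. hpow (a j) (y j)) * hpow b (t - (\<Sum>j\<in>insert i I. y j))) \<partial>PiM (insert i I) (\<lambda>_. lborel))
     = (\<integral>\<^sup>+x. (\<integral>\<^sup>+y. ennreal ((\<Prod>j\<in>insert i I. hpow (a j) ((x(i:=y)) j)) * hpow b (t - (\<Sum>j\<in>insert i I. (x(i:=y)) j))) \<partial>lborel) \<partial>PiM I (\<lambda>_. lborel))"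
    by (rule pl.product_nn_integral_insert[OF insert(1,2) m])
  also have "\<dots> = (\<integral>\<^sup>+x. ennreal ((\<Prod>j\<in>I. hpow (a j) (x j)) * hpow (a i + b + 1) (t - (\<Sum>j\<in>I. x j))) * ennreal (fact (a i) * fact b / fact (a i + b + 1)) \<partial>PiM I (\<lambda>_. lborel))"
  proof (rule nn_integral_cong)
    fix x :: "nat \<Rightarrow> real"
    have p: "(\<Prod>j\<in>I. hpow (a j) (if j = i then y else x j)) = (\<Prod>j\<in>I. hpow (a j) (x j))" for y
      using insert(2) by (intro prod.cong) auto
    have s: "(\<Sum>j\<in>I. (if j = i then y else x j)) = (\<Sum>j\<in>I. x j)" for y
      using insert(2) by (intro sum.cong) auto
    have "(\<integral>\<^sup>+y. ennreal ((\<Prod>j\<in>insert i I. hpow (a j) ((x(i:=y)) j)) * hpow b (t - (\<Sum>j\<in>insert i I. (x(i:=y)) j))) \<partial>lborel)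
       = (\<integral>\<^sup>+y. ennreal (\<Prod>j\<in>I. hpow (a j) (x j)) * ennreal (hpow (a i) y * hpow b ((t - (\<Sum>j\<in>I. x j)) - y)) \<partial>lborel)"
      using insert(1,2) by (intro nn_integral_cong) (simp add: p s ennreal_mult'[symmetric] prod_nonneg algebra_simps)
    also have "\<dots> = ennreal (\<Prod>j\<in>I. hpow (a j) (x j)) * (\<integral>\<^sup>+y. ennreal (hpow (a i) y * hpow b ((t - (\<Sum>j\<in>I. x j)) - y)) \<partial>lborel)"
      by (rule nn_integral_cmult) measurable
    also have "\<dots> = ennreal ((\<Prod>j\<in>I. hpow (a j) (x j)) * hpow (a i + b + 1) (t - (\<Sum>j\<in>I. x j))) * ennreal (fact (a i) * fact b / fact (a i + b + 1))"
      by (simp add: inner_beta ennreal_mult'[symmetric] prod_nonneg mult_ac)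
    finally show "(\<integral>\<^sup>+y. ennreal ((\<Prod>j\<in>insert i I. hpow (a j) ((x(i:=y)) j)) * hpow b (t - (\<Sum>j\<in>insert i I. (x(i:=y)) j))) \<partial>lborel)
       = ennreal ((\<Prod>j\<in>I. hpow (a j) (x j)) * hpow (a i + b + 1) (t - (\<Sum>j\<in>I. x j))) * ennreal (fact (a i) * fact b / fact (a i + b + 1))" .
  qed
  also have "\<dots> = (\<integral>\<^sup>+x. ennreal ((\<Prod>j\<in>I. hpow (a j) (x j)) * hpow (a i + b + 1) (t - (\<Sum>j\<in>I. x j))) \<partial>PiM I (\<lambda>_. lborel)) * ennreal (fact (a i) * fact b / fact (a i + b + 1))"
    by (rule nn_integral_multc) measurable
  also have "\<dots> = ennreal (hpow (sum a I + (a i + b + 1) + card I) t * ((\<Prod>j\<in>I. fact (a j)) * fact (a i + b + 1) / fact (sum a I + (a i + b + 1) + card I))) * ennreal (fact (a i) * fact b / fact (a i + b + 1))"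
    by (simp add: insert.IH)
  also have "\<dots> = ennreal (hpow (sum a (insert i I) + b + card (insert i I)) t * ((\<Prod>j\<in>insert i I. fact (a j)) * fact b / fact (sum a (insert i I) + b + card (insert i I))))"
  proof -
    have e1: "sum a (insert i I) + b + card (insert i I) = sum a I + (a i + b + 1) + card I"
      using insert(1,2) by simp
    have e2: "(\<Prod>j\<in>insert i I. fact (a j)) = fact (a i) * (\<Prod>j\<in>I. fact (a j) :: real)"
      using insert(1,2) by simp
    define N where "N = sum a I + (a i + b + 1) + card I"
    define F where "F = (fact (a i + b + 1) :: real)"
    have F: "F > 0" unfolding F_def by simp
    have r: "hpow N t * ((\<Prod>j\<in>I. fact (a j)) * F / fact N) * (fact (a i) * fact b / F)
       = hpow N t * (fact (a i) * (\<Prod>j\<in>I. fact (a j)) * fact b / fact N)"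
      using F by (simp add: field_simps)
    have nn: "0 \<le> hpow N t * ((\<Prod>j\<in>I. fact (a j)) * F / fact N)"
      using F by (simp add: prod_nonneg)
    show ?thesis unfolding e1 e2 N_def[symmetric] F_def[symmetric]
      by (subst ennreal_mult'[symmetric, OF nn]) (use F in \<open>simp add: r mult_ac\<close>)
  qed
  finally show ?case .
qed


lemma prod_fiber:
  fixes p :: "nat \<Rightarrow> 'a::comm_monoid_mult"
  assumes "\<sigma> \<in> {1..n} \<rightarrow>\<^sub>E {1..k}"
  shows "(\<Prod>j\<in>{1..n}. p (\<sigma> j)) = (\<Prod>i\<in>{1..k}. p i ^ beta_count n \<sigma> i)"
proof -
  have "(\<Prod>j\<in>{1..n}. p (\<sigma> j)) = (\<Prod>i\<in>{1..k}. \<Prod>j\<in>{x. x \<in> {1..n} \<and> \<sigma> x = i}. p (\<sigma> j))"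
    using assms by (intro prod.group[symmetric]) auto
  also have "\<dots> = (\<Prod>i\<in>{1..k}. p i ^ beta_count n \<sigma> i)"
  proof (rule prod.cong[OF refl])
    fix i
    have "(\<Prod>j\<in>{x. x \<in> {1..n} \<and> \<sigma> x = i}. p (\<sigma> j)) = (\<Prod>j\<in>{x. x \<in> {1..n} \<and> \<sigma> x = i}. p i)"
      by (rule prod.cong) auto
    then show "(\<Prod>j\<in>{x. x \<in> {1..n} \<and> \<sigma> x = i}. p (\<sigma> j)) = p i ^ beta_count n \<sigma> i"
      by (simp add: beta_count_def)
  qed
  finally show ?thesis .
qed

lemma sum_beta:
  assumes "\<sigma> \<in> {1..n} \<rightarrow>\<^sub>E {1..k}"
  shows "(\<Sum>i\<in>{1..k}. beta_count n \<sigma> i) = n"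
proof -
  have "(\<Sum>i\<in>{1..k}. \<Sum>j\<in>{x. x \<in> {1..n} \<and> \<sigma> x = i}. (1::nat)) = (\<Sum>j\<in>{1..n}. 1)"
    using assms by (intro sum.group) auto
  then show ?thesis by (simp add: beta_count_def)
qed

lemma pt_meas[measurable]:
  "(\<lambda>y. simplex_pt k y s) \<in> borel_measurable (chart_measure k)"
proof (cases "s = k")
  case True
  then show ?thesis unfolding simplex_pt_def chart_measure_def by simp
next
  case False
  show ?thesis
  proof (cases "s \<in> {1..<k}")
    case True
    with False show ?thesis unfolding simplex_pt_def chart_measure_def by simp
  next
    case F2: False
    have "(\<lambda>y. undefined :: real) \<in> borel_measurable (chart_measure k)" by simp
    then show ?thesis
      by (rule measurable_cong[THEN iffD1, rotated])
         (use False F2 in \<open>auto simp: simplex_pt_def chart_measure_def space_PiM PiE_def extensional_def\<close>)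
  qed
qed

lemma chart_sets[measurable]: "simplex_chart k \<in> sets (chart_measure k)"
proof -
  have "{y \<in> space (chart_measure k). \<forall>s\<in>{1..k}. simplex_pt k y s \<ge> 0} \<in> sets (chart_measure k)"
    by measurable
  then show ?thesis by (simp add: simplex_chart_def)
qed

lemma hprod_split:
  assumes "k \<ge> 1"
  shows "(\<Prod>s\<in>{1..k}. hpow (e s) (simplex_pt k y s))
       = (\<Prod>j\<in>{1..<k}. hpow (e j) (y j)) * hpow (e k) (1 - (\<Sum>j\<in>{1..<k}. y j))"
proof -
  have "{1..k} = insert k {1..<k}" using assms by auto
  then have "(\<Prod>s\<in>{1..k}. hpow (e s) (simplex_pt k y s))
     = hpow (e k) (simplex_pt k y k) * (\<Prod>s\<in>{1..<k}. hpow (e s) (simplex_pt k y s))"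
    by simp
  also have "(\<Prod>s\<in>{1..<k}. hpow (e s) (simplex_pt k y s)) = (\<Prod>j\<in>{1..<k}. hpow (e j) (y j))"
    by (intro prod.cong) (auto simp: simplex_pt_def)
  finally show ?thesis by (simp add: simplex_pt_def mult_ac)
qed

lemma ind_hpow:
  assumes "y \<in> space (chart_measure k)"
  shows "indicator (simplex_chart k) y * (\<Prod>s\<in>{1..k}. simplex_pt k y s ^ (e s))
       = (\<Prod>s\<in>{1..k}. hpow (e s) (simplex_pt k y s))"
proof (cases "y \<in> simplex_chart k")
  case True
  then have "\<forall>s\<in>{1..k}. simplex_pt k y s \<ge> 0" by (simp add: simplex_chart_def)
  then show ?thesis using True by (auto simp: hpow_def intro!: prod.cong)
next
  case False
  with assms obtain s where "s \<in> {1..k}" "simplex_pt k y s < 0"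
    by (auto simp: simplex_chart_def not_le)
  then have "(\<Prod>s\<in>{1..k}. hpow (e s) (simplex_pt k y s)) = 0"
    by (intro prod_zero bexI[of _ s]) (auto simp: hpow_def)
  then show ?thesis using False by simp
qed

lemma part_a:
  fixes k r n :: nat
  assumes k: "k \<ge> 1" and r: "r \<ge> 1"
  shows "I_krn k r n =
              (\<Sum>s\<in>{1..n} \<rightarrow>\<^sub>E {1..k}.
                 1 / (\<Prod>j\<in>{1..n}. real (s j)) * (fact (k*r - 1) / fact (r - 1) ^ k)
                 * (\<Prod>i\<in>{1..k}. fact (r - 1 + beta_count n s i)) / fact (k*r + n - 1))"
proof -
  define c where "c = (fact (k*r - 1) / fact (r - 1) ^ k :: real)"
  have c0: "c \<ge> 0" by (simp add: c_def)
  define e where "e = (\<lambda>\<sigma> i. r - 1 + beta_count n \<sigma> i)"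
  define PS where "PS = {1..n} \<rightarrow>\<^sub>E {1..k}"
  have fPS: "finite PS" unfolding PS_def by (simp add: finite_PiE)
  define T where "T = (\<lambda>\<sigma> y. c / (\<Prod>j\<in>{1..n}. real (\<sigma> j)) * (\<Prod>s\<in>{1..k}. hpow (e \<sigma> s) (simplex_pt k y s)))"
  have T0: "T \<sigma> y \<ge> 0" for \<sigma> y unfolding T_def using c0 by (simp add: prod_nonneg)
  define g where "g = (\<lambda>y. indicator (simplex_chart k) y * (fact (k*r - 1) / fact (r - 1) ^ k)
                   * (\<Prod>s\<in>{1..k}. simplex_pt k y s ^ (r - 1)) :: real)"
  define f where "f = (\<lambda>y. (\<Sum>s\<in>{1..k}. simplex_pt k y s / real s) ^ n)"
  have gm: "g \<in> borel_measurable (chart_measure k)" unfolding g_def by measurable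
  have fm: "f \<in> borel_measurable (chart_measure k)" unfolding f_def by measurable
  have pw: "g y * f y = (\<Sum>\<sigma>\<in>PS. T \<sigma> y)" if y: "y \<in> space (chart_measure k)" for y
  proof -
    have "f y = (\<Prod>j\<in>{1..n}. \<Sum>s\<in>{1..k}. simplex_pt k y s / real s)"
      by (simp add: f_def)
    also have "\<dots> = (\<Sum>\<sigma>\<in>PS. \<Prod>j\<in>{1..n}. simplex_pt k y (\<sigma> j) / real (\<sigma> j))"
      unfolding PS_def by (rule prod_sum_PiE) auto
    finally have "g y * f y = (\<Sum>\<sigma>\<in>PS. g y * (\<Prod>j\<in>{1..n}. simplex_pt k y (\<sigma> j) / real (\<sigma> j)))"
      by (simp add: sum_distrib_left)
    also have "\<dots> = (\<Sum>\<sigma>\<in>PS. T \<sigma> y)"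
    proof (rule sum.cong[OF refl])
      fix \<sigma> assume s: "\<sigma> \<in> PS"
      have "(\<Prod>j\<in>{1..n}. simplex_pt k y (\<sigma> j) / real (\<sigma> j))
          = (\<Prod>j\<in>{1..n}. simplex_pt k y (\<sigma> j)) / (\<Prod>j\<in>{1..n}. real (\<sigma> j))"
        by (rule prod_dividef)
      also have "(\<Prod>j\<in>{1..n}. simplex_pt k y (\<sigma> j)) = (\<Prod>i\<in>{1..k}. simplex_pt k y i ^ beta_count n \<sigma> i)"
        using s unfolding PS_def by (rule prod_fiber)
      finally have 1: "(\<Prod>j\<in>{1..n}. simplex_pt k y (\<sigma> j) / real (\<sigma> j))
          = (\<Prod>i\<in>{1..k}. simplex_pt k y i ^ beta_count n \<sigma> i) / (\<Prod>j\<in>{1..n}. real (\<sigma> j))" .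
      have 2: "(\<Prod>s\<in>{1..k}. simplex_pt k y s ^ (r - 1)) * (\<Prod>i\<in>{1..k}. simplex_pt k y i ^ beta_count n \<sigma> i)
          = (\<Prod>s\<in>{1..k}. simplex_pt k y s ^ (e \<sigma> s))"
        by (simp add: e_def power_add prod.distrib)
      have 3: "indicator (simplex_chart k) y * (\<Prod>s\<in>{1..k}. simplex_pt k y s ^ (e \<sigma> s))
          = (\<Prod>s\<in>{1..k}. hpow (e \<sigma> s) (simplex_pt k y s))"
        by (rule ind_hpow[OF y])
      show "g y * (\<Prod>j\<in>{1..n}. simplex_pt k y (\<sigma> j) / real (\<sigma> j)) = T \<sigma> y"
        unfolding 1 T_def g_def c_def 3[symmetric] 2[symmetric] by (simp add: field_simps)
    qed
    finally show ?thesis .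
  qed
  have "I_krn k r n = integral\<^sup>L (chart_measure k) (\<lambda>y. g y * f y)"
  proof -
    have "nu k r = density (chart_measure k) g" unfolding nu_def g_def by simp
    moreover have "I_krn k r n = integral\<^sup>L (nu k r) f" unfolding I_krn_def f_def by simp
    moreover have "AE x in chart_measure k. 0 \<le> g x"
      by (rule AE_I2) (auto simp: g_def simplex_chart_def indicator_def intro!: prod_nonneg divide_nonneg_nonneg mult_nonneg_nonneg)
    ultimately show ?thesis using integral_density[OF fm gm] by simp
  qed
  also have "\<dots> = enn2real (\<integral>\<^sup>+y. ennreal (g y * f y) \<partial>chart_measure k)"
    by (rule integral_eq_nn_integral) (use gm fm pw T0 in \<open>auto intro!: AE_I2 sum_nonneg\<close>)
  also have "(\<integral>\<^sup>+y. ennreal (g y * f y) \<partial>chart_measure k) = (\<integral>\<^sup>+y. (\<Sum>\<sigma>\<in>PS. ennreal (T \<sigma> y)) \<partial>chart_measure k)"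
    by (intro nn_integral_cong) (simp add: pw T0)
  also have "\<dots> = (\<Sum>\<sigma>\<in>PS. \<integral>\<^sup>+y. ennreal (T \<sigma> y) \<partial>chart_measure k)"
    by (rule nn_integral_sum) (simp add: T_def)
  also have "\<dots> = (\<Sum>\<sigma>\<in>PS. ennreal (1 / (\<Prod>j\<in>{1..n}. real (\<sigma> j)) * (fact (k*r - 1) / fact (r - 1) ^ k)
                 * (\<Prod>i\<in>{1..k}. fact (r - 1 + beta_count n \<sigma> i)) / fact (k*r + n - 1)))"
  proof (rule sum.cong[OF refl])
    fix \<sigma> assume s: "\<sigma> \<in> PS"
    define d where "d = c / (\<Prod>j\<in>{1..n}. real (\<sigma> j))"
    have d0: "d \<ge> 0" unfolding d_def using c0 by (simp add: prod_nonneg)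
    have "(\<integral>\<^sup>+y. ennreal (T \<sigma> y) \<partial>chart_measure k)
       = (\<integral>\<^sup>+y. ennreal d * ennreal ((\<Prod>j\<in>{1..<k}. hpow (e \<sigma> j) (y j)) * hpow (e \<sigma> k) (1 - (\<Sum>j\<in>{1..<k}. y j))) \<partial>chart_measure k)"
    proof (intro nn_integral_cong)
      fix y
      have "T \<sigma> y = d * ((\<Prod>j\<in>{1..<k}. hpow (e \<sigma> j) (y j)) * hpow (e \<sigma> k) (1 - (\<Sum>j\<in>{1..<k}. y j)))"
        unfolding T_def d_def hprod_split[OF k] by simp
      then show "ennreal (T \<sigma> y) = ennreal d * ennreal ((\<Prod>j\<in>{1..<k}. hpow (e \<sigma> j) (y j)) * hpow (e \<sigma> k) (1 - (\<Sum>j\<in>{1..<k}. y j)))"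
        by (simp add: ennreal_mult'[OF d0])
    qed
    also have "\<dots> = ennreal d * (\<integral>\<^sup>+y. ennreal ((\<Prod>j\<in>{1..<k}. hpow (e \<sigma> j) (y j)) * hpow (e \<sigma> k) (1 - (\<Sum>j\<in>{1..<k}. y j))) \<partial>chart_measure k)"
      by (rule nn_integral_cmult) (simp add: chart_measure_def)
    also have "(\<integral>\<^sup>+y. ennreal ((\<Prod>j\<in>{1..<k}. hpow (e \<sigma> j) (y j)) * hpow (e \<sigma> k) (1 - (\<Sum>j\<in>{1..<k}. y j))) \<partial>chart_measure k)
       = ennreal (hpow (sum (e \<sigma>) {1..<k} + e \<sigma> k + card {1..<k}) 1 * ((\<Prod>j\<in>{1..<k}. fact (e \<sigma> j)) * fact (e \<sigma> k) / fact (sum (e \<sigma>) {1..<k} + e \<sigma> k + card {1..<k})))"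
      unfolding chart_measure_def by (rule dirichlet) simp
    also have "sum (e \<sigma>) {1..<k} + e \<sigma> k + card {1..<k} = k*r + n - 1"
    proof -
      have ins: "{1..k} = insert k {1..<k}" using k by auto
      have "sum (e \<sigma>) {1..k} = k * (r - 1) + n"
        using sum_beta[of \<sigma> n k] s unfolding e_def PS_def by (simp add: sum.distrib)
      then have "sum (e \<sigma>) {1..<k} + e \<sigma> k = k * (r - 1) + n" unfolding ins by simp
      moreover obtain k' where "k = Suc k'" using k by (cases k) auto
      moreover obtain r' where "r = Suc r'" using r by (cases r) auto
      ultimately show ?thesis by (simp add: algebra_simps)
    qed
    also have "(\<Prod>j\<in>{1..<k}. fact (e \<sigma> j)) * fact (e \<sigma> k) = (\<Prod>i\<in>{1..k}. fact (r - 1 + beta_count n \<sigma> i) :: real)"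
    proof -
      have ins: "{1..k} = insert k {1..<k}" using k by auto
      show ?thesis unfolding ins by (simp add: e_def mult_ac)
    qed
    finally show "(\<integral>\<^sup>+y. ennreal (T \<sigma> y) \<partial>chart_measure k) = ennreal (1 / (\<Prod>j\<in>{1..n}. real (\<sigma> j)) * (fact (k*r - 1) / fact (r - 1) ^ k)
                 * (\<Prod>i\<in>{1..k}. fact (r - 1 + beta_count n \<sigma> i)) / fact (k*r + n - 1))"
      using d0 by (simp add: hpow_def ennreal_mult'[symmetric] d_def c_def field_simps)
  qed
  also have "\<dots> = ennreal (\<Sum>\<sigma>\<in>PS. 1 / (\<Prod>j\<in>{1..n}. real (\<sigma> j)) * (fact (k*r - 1) / fact (r - 1) ^ k)
                 * (\<Prod>i\<in>{1..k}. fact (r - 1 + beta_count n \<sigma> i)) / fact (k*r + n - 1))"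
    by (rule sum_ennreal) (auto intro!: prod_nonneg divide_nonneg_nonneg mult_nonneg_nonneg)
  finally show ?thesis unfolding PS_def
    by (subst (asm) enn2real_ennreal) (auto intro!: sum_nonneg prod_nonneg divide_nonneg_nonneg mult_nonneg_nonneg)
qed


definition ee :: "nat \<Rightarrow> nat \<Rightarrow> real" where
  "ee m h = (if m = 0 then fact (h+1) else fact (m+h) * (real (m+h) - 1))"

definition VV :: "real \<Rightarrow> nat \<Rightarrow> nat \<Rightarrow> real" where
  "VV H l h = (\<Sum>m\<le>l. real (l choose m) * H^(l-m) * ee m h)"

lemma ee_nonneg: "ee m h \<ge> 0"
  by (auto simp: ee_def)

lemma VV_nonneg: "H \<ge> 0 \<Longrightarrow> VV H l h \<ge> 0"
  unfolding VV_def by (intro sum_nonneg mult_nonneg_nonneg ee_nonneg) auto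

lemma pascal_sum:
  fixes g :: "nat \<Rightarrow> real"
  shows "(\<Sum>m\<le>Suc l. real (Suc l choose m) * H^(Suc l - m) * g m)
       = H * (\<Sum>m\<le>l. real (l choose m) * H^(l-m) * g m) + (\<Sum>m\<le>l. real (l choose m) * H^(l-m) * g (Suc m))"
proof -
  have "(\<Sum>m\<le>Suc l. real (Suc l choose m) * H^(Suc l - m) * g m)
      = H^(Suc l) * g 0 + (\<Sum>m\<le>l. real (Suc l choose Suc m) * H^(l - m) * g (Suc m))"
    by (subst sum.atMost_Suc_shift) simp
  also have "\<dots> = H^(Suc l) * g 0 + (\<Sum>m\<le>l. real (l choose Suc m) * H^(l - m) * g (Suc m))
                 + (\<Sum>m\<le>l. real (l choose m) * H^(l - m) * g (Suc m))"
    by (simp add: sum.distrib algebra_simps)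
  also have "H^(Suc l) * g 0 + (\<Sum>m\<le>l. real (l choose Suc m) * H^(l - m) * g (Suc m))
      = H * (\<Sum>m\<le>l. real (l choose m) * H^(l-m) * g m)"
  proof (cases l)
    case 0
    then show ?thesis by simp
  next
    case (Suc l')
    have "(\<Sum>m\<le>l. real (l choose Suc m) * H^(l - m) * g (Suc m))
        = (\<Sum>m\<le>l'. real (l choose Suc m) * H^(l - m) * g (Suc m))"
    proof -
      have f0: "real (l choose Suc l) * H^(l - l) * g (Suc l) = 0" by (simp add: binomial_eq_0)
      show ?thesis using f0 sum.atMost_Suc[of "\<lambda>m. real (l choose Suc m) * H^(l - m) * g (Suc m)" l'] Suc
        by (simp only:)
    qed
    moreover have "(\<Sum>m\<le>l. real (l choose m) * H^(l-m) * g m)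
        = H^l * g 0 + (\<Sum>m\<le>l'. real (l choose Suc m) * H^(l' - m) * g (Suc m))"
      unfolding Suc by (subst sum.atMost_Suc_shift) (simp del: binomial_Suc_Suc)
    moreover have "H * (\<Sum>m\<le>l'. real (l choose Suc m) * H^(l' - m) * g (Suc m))
        = (\<Sum>m\<le>l'. real (l choose Suc m) * H^(l - m) * g (Suc m))"
      unfolding sum_distrib_left
      by (intro sum.cong refl) (simp add: Suc Suc_diff_le power_Suc)
    ultimately show ?thesis by (simp add: algebra_simps power_Suc)
  qed
  finally show ?thesis by simp
qed

lemma VV_Suc: "VV H (Suc l) h = H * VV H l h + (\<Sum>m\<le>l. real (l choose m) * H^(l-m) * ee (Suc m) h)"
  unfolding VV_def by (rule pascal_sum)

lemma absorb_sum:
  fixes g :: "nat \<Rightarrow> real"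
  shows "real l * (\<Sum>j\<le>l-1. real ((l-1) choose j) * H^((l-1)-j) * g j)
       = (\<Sum>m\<le>l. real (l choose m) * H^(l-m) * (real m * g (m-1)))"
proof (cases l)
  case 0
  then show ?thesis by simp
next
  case (Suc l')
  have "(\<Sum>m\<le>l. real (l choose m) * H^(l-m) * (real m * g (m-1)))
      = (\<Sum>j\<le>l'. real (l choose Suc j) * H^(l'-j) * (real (Suc j) * g j))"
    unfolding Suc by (subst sum.atMost_Suc_shift) simp
  also have "\<dots> = (\<Sum>j\<le>l'. real l * (real (l' choose j) * H^(l'-j) * g j))"
  proof (intro sum.cong refl)
    fix j
    have "real (Suc j) * real (Suc l' choose Suc j) = real (Suc l') * real (l' choose j)"
      using Suc_times_binomial_eq[of l' j] by (metis mult.commute of_nat_mult)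
    then have e: "real (Suc j) * real (l choose Suc j) = real l * real (l' choose j)"
      using Suc by (simp only:)
    have "real (l choose Suc j) * H^(l'-j) * (real (Suc j) * g j) = (real (Suc j) * real (l choose Suc j)) * (H^(l'-j) * g j)"
      by (simp only: mult_ac)
    also have "\<dots> = (real l * real (l' choose j)) * (H^(l'-j) * g j)" by (simp only: e)
    finally show "real (l choose Suc j) * H^(l'-j) * (real (Suc j) * g j) = real l * (real (l' choose j) * H^(l'-j) * g j)"
      by (simp only: mult_ac)
  qed
  finally show ?thesis using Suc by (simp add: sum_distrib_left)
qed

lemma VV_absorb: "real l * VV H (l-1) (h+1) = (\<Sum>m\<le>l. real (l choose m) * H^(l-m) * (real m * ee (m-1) (h+1)))"
  unfolding VV_def by (rule absorb_sum)


lemma ee_pos: "m \<ge> 1 \<Longrightarrow> ee m h = fact (m+h) * (real (m+h) - 1)"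
  by (simp add: ee_def)

lemma E1: "real h * ee m h + real m * ee (m-1) (h+1) \<le> ee (Suc m) h"
proof -
  consider "m = 0" | "m = 1" | "m \<ge> 2" by linarith
  then show ?thesis
  proof cases
    case 1 then show ?thesis by (simp add: ee_def)
  next
    case 2
    have a: "ee (Suc m) h = fact (h+2) * (real h + 1)" using 2 by (simp add: ee_def add_ac)
    have b: "ee m h = fact (h+1) * real h" using 2 by (simp add: ee_def add_ac)
    have c: "ee (m-1) (h+1) = fact (h+2)" using 2 by (simp add: ee_def)
    have f: "fact (h+2) = (real h + 2) * (fact (h+1) :: real)" by (simp add: fact_Suc)
    have "real h * (fact (h+1) * real h) + fact (h+2) \<le> fact (h+2) * (real h + 1)"
      unfolding f by (simp add: algebra_simps)
    then show ?thesis using 2 a b c by simp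
  next
    case 3
    define s where "s = m + h"
    have s2: "s \<ge> 2" using 3 by (simp add: s_def)
    have a: "ee (Suc m) h = fact (Suc s) * real s" using 3 by (simp add: ee_def s_def)
    have b: "ee m h = fact s * (real s - 1)" using 3 by (simp add: ee_def s_def)
    have c: "ee (m-1) (h+1) = fact s * (real s - 1)" using 3 by (simp add: ee_def s_def)
    have "real h * (fact s * (real s - 1)) + real m * (fact s * (real s - 1))
         = fact s * (real s * (real s - 1))" by (simp add: s_def algebra_simps)
    also have "\<dots> \<le> fact s * ((real s + 1) * real s)"
      by (intro mult_left_mono) (use s2 in \<open>auto simp: algebra_simps\<close>)
    also have "\<dots> = fact (Suc s) * real s" by (simp add: fact_Suc algebra_simps)
    finally show ?thesis using a b c by simp
  qed
qed

lemma E2: "real (h+2) * ee m h + real m * ee (m-1) (h+1) \<le> ee m (h+1)"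
proof -
  consider "m = 0" | "m = 1" | "m \<ge> 2" by linarith
  then show ?thesis
  proof cases
    case 1 then show ?thesis by (simp add: ee_def fact_Suc algebra_simps)
  next
    case 2
    have a: "ee m (h+1) = fact (h+2) * (real h + 1)" using 2 by (simp add: ee_def add_ac)
    have b: "ee m h = fact (h+1) * real h" using 2 by (simp add: ee_def add_ac)
    have c: "ee (m-1) (h+1) = fact (h+2)" using 2 by (simp add: ee_def)
    have f: "fact (h+2) = (real h + 2) * (fact (h+1) :: real)" by (simp add: fact_Suc)
    have "(real h + 2) * (fact (h+1) * real h) + fact (h+2) \<le> fact (h+2) * (real h + 1)"
      unfolding f by (simp add: algebra_simps)
    then show ?thesis using 2 a b c by (simp add: add.commute)
  next
    case 3
    define s where "s = m + h"
    have s2: "s \<ge> 2" using 3 by (simp add: s_def)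
    have a: "ee m (h+1) = fact (Suc s) * real s" using 3 by (simp add: ee_def s_def)
    have b: "ee m h = fact s * (real s - 1)" using 3 by (simp add: ee_def s_def)
    have c: "ee (m-1) (h+1) = fact s * (real s - 1)" using 3 by (simp add: ee_def s_def)
    have "real (h+2) * (fact s * (real s - 1)) + real m * (fact s * (real s - 1))
         = fact s * ((real s + 2) * (real s - 1))" by (simp add: s_def algebra_simps)
    also have "\<dots> \<le> fact s * ((real s + 1) * real s)"
      by (intro mult_left_mono) (use s2 in \<open>auto simp: algebra_simps\<close>)
    also have "\<dots> = fact (Suc s) * real s" by (simp add: fact_Suc algebra_simps)
    finally show ?thesis using a b c by simp
  qed
qed

lemma VL:
  assumes "H \<ge> 0"
  shows "(H + real h) * VV H l h + real l * VV H (l-1) (h+1) \<le> VV H (Suc l) h"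
proof -
  have "real h * VV H l h + real l * VV H (l-1) (h+1)
      = (\<Sum>m\<le>l. real (l choose m) * H^(l-m) * (real h * ee m h + real m * ee (m-1) (h+1)))"
    unfolding VV_absorb by (simp add: VV_def sum_distrib_left sum.distrib algebra_simps)
  also have "\<dots> \<le> (\<Sum>m\<le>l. real (l choose m) * H^(l-m) * ee (Suc m) h)"
    using assms by (intro sum_mono mult_left_mono E1) auto
  finally show ?thesis unfolding VV_Suc by (simp add: algebra_simps)
qed

lemma VH:
  assumes "H \<ge> 0"
  shows "real (h+2) * VV H l h + real l * VV H (l-1) (h+1) \<le> VV H l (h+1)"
proof -
  have "real (h+2) * VV H l h + real l * VV H (l-1) (h+1)
      = (\<Sum>m\<le>l. real (l choose m) * H^(l-m) * (real (h+2) * ee m h + real m * ee (m-1) (h+1)))"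
    unfolding VV_absorb by (simp add: VV_def sum_distrib_left sum.distrib algebra_simps)
  also have "\<dots> \<le> (\<Sum>m\<le>l. real (l choose m) * H^(l-m) * ee m (h+1))"
    using assms by (intro sum_mono mult_left_mono E2) auto
  finally show ?thesis unfolding VV_def .
qed


lemma sum_PiE_Suc:
  fixes F :: "(nat \<Rightarrow> 'b) \<Rightarrow> real"
  assumes "finite B"
  shows "(\<Sum>\<sigma>\<in>{1..Suc m} \<rightarrow>\<^sub>E B. F \<sigma>) = (\<Sum>\<sigma>\<in>{1..m} \<rightarrow>\<^sub>E B. \<Sum>v\<in>B. F (\<sigma>(Suc m := v)))"
proof -
  have ins: "{1..Suc m} = insert (Suc m) {1..m}" by auto
  have "(\<Sum>\<sigma>\<in>{1..Suc m} \<rightarrow>\<^sub>E B. F \<sigma>) = (\<Sum>(v,\<sigma>)\<in>B \<times> ({1..m} \<rightarrow>\<^sub>E B). F (\<sigma>(Suc m := v)))"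
    unfolding ins
    by (intro sum.reindex_bij_witness[of _ "\<lambda>(y,g). g(Suc m := y)" "\<lambda>g. (g (Suc m), g(Suc m := undefined))"])
       (auto simp: PiE_def extensional_def)
  also have "\<dots> = (\<Sum>v\<in>B. \<Sum>\<sigma>\<in>{1..m} \<rightarrow>\<^sub>E B. F (\<sigma>(Suc m := v)))"
    by (subst sum.cartesian_product) auto
  also have "\<dots> = (\<Sum>\<sigma>\<in>{1..m} \<rightarrow>\<^sub>E B. \<Sum>v\<in>B. F (\<sigma>(Suc m := v)))"
    by (rule sum.swap)
  finally show ?thesis .
qed

definition Gf :: "nat \<Rightarrow> nat \<Rightarrow> nat \<Rightarrow> (nat \<Rightarrow> nat) \<Rightarrow> real" where
  "Gf k r m \<sigma> = (\<Prod>i\<in>{1..k}. pochhammer (real r) (beta_count m \<sigma> i) / real r ^ beta_count m \<sigma> i)"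

definition SS :: "nat \<Rightarrow> nat \<Rightarrow> nat \<Rightarrow> (nat \<Rightarrow> nat \<Rightarrow> real) \<Rightarrow> real" where
  "SS k r m z = (\<Sum>\<sigma>\<in>{1..m} \<rightarrow>\<^sub>E {1..k}. (\<Prod>t\<in>{1..m}. z t (\<sigma> t)) * Gf k r m \<sigma>)"

lemma Gf_nonneg: "r \<ge> 1 \<Longrightarrow> Gf k r m \<sigma> \<ge> 0"
  unfolding Gf_def by (intro prod_nonneg divide_nonneg_nonneg pochhammer_nonneg) auto

lemma bc_upd:
  assumes "\<sigma> \<in> {1..m} \<rightarrow>\<^sub>E {1..k}"
  shows "beta_count (Suc m) (\<sigma>(Suc m := v)) i = beta_count m \<sigma> i + (if i = v then 1 else 0)"
proof -
  have "{j \<in> {1..Suc m}. (\<sigma>(Suc m := v)) j = i} = {j \<in> {1..m}. \<sigma> j = i} \<union> (if v = i then {Suc m} else {})"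
    by auto
  moreover have "card ({j \<in> {1..m}. \<sigma> j = i} \<union> (if v = i then {Suc m} else {})) = card {j \<in> {1..m}. \<sigma> j = i} + (if i = v then 1 else 0)"
    by (auto simp: card_insert_if)
  ultimately show ?thesis by (simp add: beta_count_def)
qed

lemma Gf_upd:
  assumes "\<sigma> \<in> {1..m} \<rightarrow>\<^sub>E {1..k}" "v \<in> {1..k}" "r \<ge> 1"
  shows "Gf k r (Suc m) (\<sigma>(Suc m := v)) = Gf k r m \<sigma> * ((real r + real (beta_count m \<sigma> v)) / real r)"
proof -
  have "Gf k r (Suc m) (\<sigma>(Suc m := v)) = (\<Prod>i\<in>{1..k}. (pochhammer (real r) (beta_count m \<sigma> i) / real r ^ beta_count m \<sigma> i)
        * (if i = v then (real r + real (beta_count m \<sigma> v)) / real r else 1))"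
    unfolding Gf_def
  proof (intro prod.cong refl)
    fix i
    show "pochhammer (real r) (beta_count (Suc m) (\<sigma>(Suc m := v)) i) / real r ^ beta_count (Suc m) (\<sigma>(Suc m := v)) i =
         pochhammer (real r) (beta_count m \<sigma> i) / real r ^ beta_count m \<sigma> i * (if i = v then (real r + real (beta_count m \<sigma> v)) / real r else 1)"
      using assms by (auto simp: bc_upd pochhammer_rec' field_simps)
  qed
  also have "\<dots> = Gf k r m \<sigma> * ((real r + real (beta_count m \<sigma> v)) / real r)"
    using assms(2) by (simp only: prod.distrib Gf_def) (simp add: prod.delta)
  finally show ?thesis .
qed

lemma prod_upd:
  assumes "\<sigma> \<in> {1..m} \<rightarrow>\<^sub>E {1..k}"
  shows "(\<Prod>t\<in>{1..Suc m}. z t ((\<sigma>(Suc m := v)) t)) = (\<Prod>t\<in>{1..m}. z t (\<sigma> t)) * z (Suc m) v"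
proof -
  have ins: "{1..Suc m} = insert (Suc m) {1..m}" by auto
  have "(\<Prod>t\<in>{1..m}. z t ((\<sigma>(Suc m := v)) t)) = (\<Prod>t\<in>{1..m}. z t (\<sigma> t))"
    by (intro prod.cong) auto
  then show ?thesis unfolding ins by (simp add: mult_ac)
qed

lemma sum_bc:
  assumes "\<sigma> \<in> {1..m} \<rightarrow>\<^sub>E {1..k}"
  shows "(\<Sum>v\<in>{1..k}. w v * real (beta_count m \<sigma> v)) = (\<Sum>t\<in>{1..m}. w (\<sigma> t))"
proof -
  have "(\<Sum>t\<in>{1..m}. w (\<sigma> t)) = (\<Sum>v\<in>{1..k}. \<Sum>t\<in>{x. x \<in> {1..m} \<and> \<sigma> x = v}. w (\<sigma> t))"
    using assms by (intro sum.group[symmetric]) auto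
  also have "\<dots> = (\<Sum>v\<in>{1..k}. w v * real (beta_count m \<sigma> v))"
  proof (intro sum.cong refl)
    fix v
    have "(\<Sum>t\<in>{x. x \<in> {1..m} \<and> \<sigma> x = v}. w (\<sigma> t)) = (\<Sum>t\<in>{x. x \<in> {1..m} \<and> \<sigma> x = v}. w v)"
      by (intro sum.cong) auto
    then show "(\<Sum>t\<in>{x. x \<in> {1..m} \<and> \<sigma> x = v}. w (\<sigma> t)) = w v * real (beta_count m \<sigma> v)"
      by (simp add: beta_count_def)
  qed
  finally show ?thesis ..
qed

lemma SS_rec:
  assumes "r \<ge> 1"
  shows "SS k r (Suc m) z = (\<Sum>v\<in>{1..k}. z (Suc m) v) * SS k r m z
           + (1 / real r) * (\<Sum>t\<in>{1..m}. SS k r m (z(t := (\<lambda>v. z t v * z (Suc m) v))))"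
proof -
  define P where "P = (\<lambda>\<sigma>. (\<Prod>t\<in>{1..m}. z t (\<sigma> t)) * Gf k r m \<sigma>)"
  have "SS k r (Suc m) z = (\<Sum>\<sigma>\<in>{1..m} \<rightarrow>\<^sub>E {1..k}. \<Sum>v\<in>{1..k}.
           (\<Prod>t\<in>{1..Suc m}. z t ((\<sigma>(Suc m := v)) t)) * Gf k r (Suc m) (\<sigma>(Suc m := v)))"
    unfolding SS_def by (rule sum_PiE_Suc) simp
  also have "\<dots> = (\<Sum>\<sigma>\<in>{1..m} \<rightarrow>\<^sub>E {1..k}. P \<sigma> * (\<Sum>v\<in>{1..k}. z (Suc m) v)
           + (1 / real r) * (\<Sum>t\<in>{1..m}. P \<sigma> * z (Suc m) (\<sigma> t)))"
  proof (intro sum.cong refl)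
    fix \<sigma> assume s: "\<sigma> \<in> {1..m} \<rightarrow>\<^sub>E {1..k}"
    have "(\<Sum>v\<in>{1..k}. (\<Prod>t\<in>{1..Suc m}. z t ((\<sigma>(Suc m := v)) t)) * Gf k r (Suc m) (\<sigma>(Suc m := v)))
        = (\<Sum>v\<in>{1..k}. P \<sigma> * z (Suc m) v + (1 / real r) * (P \<sigma> * (z (Suc m) v * real (beta_count m \<sigma> v))))"
    proof (intro sum.cong refl)
      fix v assume v: "v \<in> {1..k}"
      show "(\<Prod>t\<in>{1..Suc m}. z t ((\<sigma>(Suc m := v)) t)) * Gf k r (Suc m) (\<sigma>(Suc m := v))
          = P \<sigma> * z (Suc m) v + (1 / real r) * (P \<sigma> * (z (Suc m) v * real (beta_count m \<sigma> v)))"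
        unfolding prod_upd[OF s] Gf_upd[OF s v assms] P_def
        using assms by (simp add: field_simps)
    qed
    also have "\<dots> = P \<sigma> * (\<Sum>v\<in>{1..k}. z (Suc m) v) + (1 / real r) * (P \<sigma> * (\<Sum>v\<in>{1..k}. z (Suc m) v * real (beta_count m \<sigma> v)))"
      by (simp add: sum.distrib sum_distrib_left)
    also have "(\<Sum>v\<in>{1..k}. z (Suc m) v * real (beta_count m \<sigma> v)) = (\<Sum>t\<in>{1..m}. z (Suc m) (\<sigma> t))"
      by (rule sum_bc[OF s])
    finally show "(\<Sum>v\<in>{1..k}. (\<Prod>t\<in>{1..Suc m}. z t ((\<sigma>(Suc m := v)) t)) * Gf k r (Suc m) (\<sigma>(Suc m := v)))
        = P \<sigma> * (\<Sum>v\<in>{1..k}. z (Suc m) v) + (1 / real r) * (\<Sum>t\<in>{1..m}. P \<sigma> * z (Suc m) (\<sigma> t))"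
      by (simp only: sum_distrib_left)
  qed
  also have "\<dots> = (\<Sum>v\<in>{1..k}. z (Suc m) v) * SS k r m z
           + (1 / real r) * (\<Sum>t\<in>{1..m}. \<Sum>\<sigma>\<in>{1..m} \<rightarrow>\<^sub>E {1..k}. P \<sigma> * z (Suc m) (\<sigma> t))"
  proof -
    have 1: "(\<Sum>\<sigma>\<in>{1..m} \<rightarrow>\<^sub>E {1..k}. P \<sigma> * (\<Sum>v\<in>{1..k}. z (Suc m) v)) = (\<Sum>v\<in>{1..k}. z (Suc m) v) * SS k r m z"
    proof -
      have "(\<Sum>\<sigma>\<in>{1..m} \<rightarrow>\<^sub>E {1..k}. P \<sigma> * (\<Sum>v\<in>{1..k}. z (Suc m) v)) = (\<Sum>\<sigma>\<in>{1..m} \<rightarrow>\<^sub>E {1..k}. P \<sigma>) * (\<Sum>v\<in>{1..k}. z (Suc m) v)"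
        by (rule sum_distrib_right[symmetric])
      moreover have "(\<Sum>\<sigma>\<in>{1..m} \<rightarrow>\<^sub>E {1..k}. P \<sigma>) = SS k r m z" by (simp add: SS_def P_def)
      ultimately show ?thesis by (simp only: mult.commute)
    qed
    have 2: "(\<Sum>\<sigma>\<in>{1..m} \<rightarrow>\<^sub>E {1..k}. \<Sum>t\<in>{1..m}. P \<sigma> * z (Suc m) (\<sigma> t))
        = (\<Sum>t\<in>{1..m}. \<Sum>\<sigma>\<in>{1..m} \<rightarrow>\<^sub>E {1..k}. P \<sigma> * z (Suc m) (\<sigma> t))"
      by (rule sum.swap)
    have 3: "(\<Sum>\<sigma>\<in>{1..m} \<rightarrow>\<^sub>E {1..k}. P \<sigma> * (\<Sum>v\<in>{1..k}. z (Suc m) v)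
           + (1 / real r) * (\<Sum>t\<in>{1..m}. P \<sigma> * z (Suc m) (\<sigma> t)))
        = (\<Sum>\<sigma>\<in>{1..m} \<rightarrow>\<^sub>E {1..k}. P \<sigma> * (\<Sum>v\<in>{1..k}. z (Suc m) v))
           + (1 / real r) * (\<Sum>\<sigma>\<in>{1..m} \<rightarrow>\<^sub>E {1..k}. \<Sum>t\<in>{1..m}. P \<sigma> * z (Suc m) (\<sigma> t))"
      by (simp only: sum.distrib sum_distrib_left[of "1 / real r"])
    show ?thesis unfolding 3 1 2 ..
  qed
  also have "(\<Sum>t\<in>{1..m}. \<Sum>\<sigma>\<in>{1..m} \<rightarrow>\<^sub>E {1..k}. P \<sigma> * z (Suc m) (\<sigma> t))
      = (\<Sum>t\<in>{1..m}. SS k r m (z(t := (\<lambda>v. z t v * z (Suc m) v))))"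
  proof (intro sum.cong refl)
    fix t assume t: "t \<in> {1..m}"
    show "(\<Sum>\<sigma>\<in>{1..m} \<rightarrow>\<^sub>E {1..k}. P \<sigma> * z (Suc m) (\<sigma> t)) = SS k r m (z(t := (\<lambda>v. z t v * z (Suc m) v)))"
      unfolding SS_def P_def
    proof (intro sum.cong refl)
      fix \<sigma>
      have "(\<Prod>t'\<in>{1..m}. (z(t := (\<lambda>v. z t v * z (Suc m) v))) t' (\<sigma> t'))
          = (\<Prod>t'\<in>{1..m}. z t' (\<sigma> t') * (if t' = t then z (Suc m) (\<sigma> t) else 1))"
        by (intro prod.cong) auto
      also have "\<dots> = (\<Prod>t'\<in>{1..m}. z t' (\<sigma> t')) * z (Suc m) (\<sigma> t)"
        using t by (simp add: prod.distrib prod.delta)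
      finally show "(\<Prod>t\<in>{1..m}. z t (\<sigma> t)) * Gf k r m \<sigma> * z (Suc m) (\<sigma> t) =
          (\<Prod>t'\<in>{1..m}. (z(t := (\<lambda>v. z t v * z (Suc m) v))) t' (\<sigma> t')) * Gf k r m \<sigma>"
        by (simp add: mult_ac)
    qed
  qed
  finally show ?thesis .
qed


lemma aux_ineq: "(a::real) \<ge> 1 \<Longrightarrow> 1/(a+1) + (1/(a+1))^2 \<le> 1/a"
proof -
  assume a: "a \<ge> 1"
  define b where "b = a + 1"
  have b: "b > 0" "b \<noteq> 0" "a \<noteq> 0" "a > 0" using a by (auto simp: b_def)
  have "1/a - (1/b + (1/b)^2) = 1 / (a * b^2)"
    using b by (simp add: field_simps power2_eq_square) (simp add: b_def algebra_simps)
  moreover have "1 / (a * b^2) \<ge> 0" using b by simp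
  ultimately show ?thesis unfolding b_def by linarith
qed

lemma sum_inv_sq: "k \<ge> 1 \<Longrightarrow> (\<Sum>v\<in>{1..k}. (1 / real v)^2) \<le> 2 - 1 / real k"
proof (induction k rule: dec_induct)
  case base then show ?case by simp
next
  case (step k)
  have "(\<Sum>v\<in>{1..Suc k}. (1 / real v)^2) = (\<Sum>v\<in>{1..k}. (1 / real v)^2) + (1 / real (Suc k))^2"
    by simp
  also have "\<dots> \<le> 2 - 1 / real k + (1 / real (Suc k))^2" using step by simp
  also have "\<dots> \<le> 2 - 1 / real (Suc k)"
  proof -
    have k: "real k \<ge> 1" using step by simp
    have "1 / real (Suc k) + (1 / real (Suc k))^2 \<le> 1 / real k"
      using aux_ineq[OF k] by (simp add: add.commute)
    then show ?thesis by simp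
  qed
  finally show ?case .
qed

lemma sum_inv_sq2: "(\<Sum>v\<in>{1..k}. (1 / real v)^2) \<le> 2"
proof (cases "k \<ge> 1")
  case True
  with sum_inv_sq[OF True] show ?thesis by (smt (verit) divide_nonneg_nonneg of_nat_0_le_iff)
qed simp

lemma harm_eq: "harm k = (\<Sum>v\<in>{1..k}. 1 / real v)"
  by (simp add: harm_def divide_inverse)

lemma SS_nonneg:
  assumes "r \<ge> 1" "\<forall>t\<in>{1..m}. \<forall>v\<in>{1..k}. 0 \<le> z t v"
  shows "SS k r m z \<ge> 0"
  unfolding SS_def using assms
  by (intro sum_nonneg mult_nonneg_nonneg prod_nonneg Gf_nonneg) (auto simp: PiE_def Pi_def)

lemma SS_zero: "SS k r 0 z = 1"
  by (simp add: SS_def Gf_def beta_count_def)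

lemma SS_bound:
  assumes r: "r \<ge> 1"
  shows "\<forall>z Hv. Hv \<subseteq> {1..m} \<longrightarrow> (\<forall>t\<in>{1..m}. \<forall>v\<in>{1..k}. 0 \<le> z t v \<and> z t v \<le> 1 / real v)
           \<longrightarrow> (\<forall>t\<in>Hv. \<forall>v\<in>{1..k}. z t v \<le> (1 / real v)^2)
           \<longrightarrow> SS k r m z \<le> VV (harm k) (m - card Hv) (card Hv)"
proof (induction m)
  case 0
  show ?case by (auto simp: SS_zero VV_def ee_def)
next
  case (Suc m)
  show ?case
  proof (intro allI impI)
    fix z :: "nat \<Rightarrow> nat \<Rightarrow> real" and Hv
    assume Hv: "Hv \<subseteq> {1..Suc m}"
      and zb: "\<forall>t\<in>{1..Suc m}. \<forall>v\<in>{1..k}. 0 \<le> z t v \<and> z t v \<le> 1 / real v"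
      and hb: "\<forall>t\<in>Hv. \<forall>v\<in>{1..k}. z t v \<le> (1 / real v)^2"
    define H where "H = (harm k :: real)"
    have H0: "H \<ge> 0" unfolding H_def by (rule harm_nonneg)
    define Hv' where "Hv' = Hv - {Suc m}"
    have Hv'sub: "Hv' \<subseteq> {1..m}" using Hv by (auto simp: Hv'_def)
    have fin: "finite Hv'" using Hv'sub finite_subset by blast
    define h where "h = card Hv'"
    have hm: "h \<le> m" unfolding h_def using card_mono[OF _ Hv'sub] by simp
    define zt where "zt = (\<lambda>t. z(t := (\<lambda>v. z t v * z (Suc m) v)))"
    have zb': "\<forall>t\<in>{1..m}. \<forall>v\<in>{1..k}. 0 \<le> z t v \<and> z t v \<le> 1 / real v" using zb by auto
    have IH1: "SS k r m z \<le> VV H (m - h) h"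
      using Suc.IH Hv'sub zb' hb unfolding h_def H_def Hv'_def by auto
    have S0: "SS k r m z \<ge> 0" using SS_nonneg[OF r] zb' by auto
    have ztb: "\<forall>t'\<in>{1..m}. \<forall>v\<in>{1..k}. 0 \<le> zt t t' v \<and> zt t t' v \<le> 1 / real v" if t: "t \<in> {1..m}" for t
    proof (intro ballI)
      fix t' v assume t': "t' \<in> {1..m}" and v: "v \<in> {1..k}"
      have a: "0 \<le> z t v" "z t v \<le> 1 / real v" "0 \<le> z (Suc m) v" "z (Suc m) v \<le> 1 / real v"
        using zb t v by auto
      have x1: "1 / real v \<le> 1" using v by simp
      have "z t v * z (Suc m) v \<le> 1 / real v * 1"
        using a x1 by (intro mult_mono) auto
      then show "0 \<le> zt t t' v \<and> zt t t' v \<le> 1 / real v"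
        using a zb t' v by (auto simp: zt_def)
    qed
    have zth: "\<forall>t'\<in>insert t Hv'. \<forall>v\<in>{1..k}. zt t t' v \<le> (1 / real v)^2" if t: "t \<in> {1..m}" for t
    proof (intro ballI)
      fix t' v assume t': "t' \<in> insert t Hv'" and v: "v \<in> {1..k}"
      have a: "0 \<le> z t v" "z t v \<le> 1 / real v" "0 \<le> z (Suc m) v" "z (Suc m) v \<le> 1 / real v"
        using zb t v by auto
      have "z t v * z (Suc m) v \<le> (1 / real v) * (1 / real v)"
        using a by (intro mult_mono) auto
      then show "zt t t' v \<le> (1 / real v)^2"
        using t' hb v by (auto simp: zt_def power2_eq_square Hv'_def)
    qed
    have IH2: "SS k r m (zt t) \<le> VV H (m - card (insert t Hv')) (card (insert t Hv'))" if t: "t \<in> {1..m}" for t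
      using Suc.IH ztb[OF t] zth[OF t] Hv'sub t unfolding H_def by auto
    have S0t: "SS k r m (zt t) \<ge> 0" if t: "t \<in> {1..m}" for t
      using SS_nonneg[OF r] ztb[OF t] by auto
    have "(1 / real r) * (\<Sum>t\<in>{1..m}. SS k r m (zt t)) \<le> (\<Sum>t\<in>{1..m}. SS k r m (zt t))"
    proof -
      have "0 \<le> (\<Sum>t\<in>{1..m}. SS k r m (zt t))" using S0t by (intro sum_nonneg) auto
      moreover have "1 / real r \<le> 1" using r by simp
      ultimately have "(\<Sum>t\<in>{1..m}. SS k r m (zt t)) / real r \<le> (\<Sum>t\<in>{1..m}. SS k r m (zt t)) / 1"
        using r by (intro divide_left_mono) auto
      then show ?thesis by simp
    qed
    also have "\<dots> \<le> (\<Sum>t\<in>{1..m}. VV H (m - card (insert t Hv')) (card (insert t Hv')))"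
      by (intro sum_mono IH2)
    also have "\<dots> = real h * VV H (m - h) h + real (m - h) * VV H (m - h - 1) (h + 1)"
    proof -
      have "(\<Sum>t\<in>{1..m}. VV H (m - card (insert t Hv')) (card (insert t Hv')))
          = (\<Sum>t\<in>Hv'. VV H (m - card (insert t Hv')) (card (insert t Hv')))
            + (\<Sum>t\<in>{1..m} - Hv'. VV H (m - card (insert t Hv')) (card (insert t Hv')))"
        using Hv'sub by (subst sum.subset_diff[of Hv' "{1..m}"]) (auto simp: add.commute)
      also have "(\<Sum>t\<in>Hv'. VV H (m - card (insert t Hv')) (card (insert t Hv'))) = (\<Sum>t\<in>Hv'. VV H (m - h) h)"
        by (intro sum.cong refl) (simp add: insert_absorb h_def)
      also have "(\<Sum>t\<in>{1..m} - Hv'. VV H (m - card (insert t Hv')) (card (insert t Hv'))) = (\<Sum>t\<in>{1..m} - Hv'. VV H (m - h - 1) (h + 1))"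
        by (intro sum.cong refl) (use fin in \<open>simp add: h_def\<close>)
      also have "card ({1..m} - Hv') = m - h" using Hv'sub fin by (simp add: card_Diff_subset h_def)
      ultimately show ?thesis by (simp add: h_def)
    qed
    finally have T2: "(1 / real r) * (\<Sum>t\<in>{1..m}. SS k r m (zt t)) \<le> real h * VV H (m - h) h + real (m - h) * VV H (m - h - 1) (h + 1)" .
    have rec: "SS k r (Suc m) z = (\<Sum>v\<in>{1..k}. z (Suc m) v) * SS k r m z + (1 / real r) * (\<Sum>t\<in>{1..m}. SS k r m (zt t))"
      unfolding zt_def by (rule SS_rec[OF r])
    have VVn: "VV H (m - h) h \<ge> 0" by (rule VV_nonneg[OF H0])
    have cz0: "0 \<le> (\<Sum>v\<in>{1..k}. z (Suc m) v)" using zb by (intro sum_nonneg) auto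
    show "SS k r (Suc m) z \<le> VV (harm k) (Suc m - card Hv) (card Hv)"
    proof (cases "Suc m \<in> Hv")
      case False
      then have HvE: "Hv = Hv'" by (auto simp: Hv'_def)
      have cz: "(\<Sum>v\<in>{1..k}. z (Suc m) v) \<le> H"
        unfolding H_def harm_eq using zb by (intro sum_mono) auto
      have "(\<Sum>v\<in>{1..k}. z (Suc m) v) * SS k r m z \<le> H * VV H (m - h) h"
        using cz IH1 S0 H0 cz0 by (intro mult_mono) auto
      with T2 rec have "SS k r (Suc m) z \<le> (H + real h) * VV H (m - h) h + real (m - h) * VV H (m - h - 1) (h + 1)"
        by (simp add: algebra_simps)
      also have "\<dots> \<le> VV H (Suc (m - h)) h" by (rule VL[OF H0])
      finally show ?thesis using HvE hm by (simp add: H_def h_def Suc_diff_le)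
    next
      case True
      then have HvE: "Hv = insert (Suc m) Hv'" by (auto simp: Hv'_def)
      have ch: "card Hv = h + 1" unfolding HvE h_def using fin Hv'sub by (subst card_insert_disjoint) auto
      have cz: "(\<Sum>v\<in>{1..k}. z (Suc m) v) \<le> 2"
      proof -
        have "(\<Sum>v\<in>{1..k}. z (Suc m) v) \<le> (\<Sum>v\<in>{1..k}. (1 / real v)^2)"
          using hb True by (intro sum_mono) auto
        then show ?thesis using sum_inv_sq2[of k] by linarith
      qed
      have "(\<Sum>v\<in>{1..k}. z (Suc m) v) * SS k r m z \<le> 2 * VV H (m - h) h"
        using cz IH1 S0 cz0 by (intro mult_mono) auto
      with T2 rec have "SS k r (Suc m) z \<le> real (h + 2) * VV H (m - h) h + real (m - h) * VV H (m - h - 1) (h + 1)"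
        by (simp add: algebra_simps)
      also have "\<dots> \<le> VV H (m - h) (h + 1)" by (rule VH[OF H0])
      finally show ?thesis using ch by (simp add: H_def)
    qed
  qed
qed


lemma three_le_pow: "m \<ge> 2 \<Longrightarrow> 3 * (real m - 1) \<le> 2 ^ m"
proof (induction m rule: dec_induct)
  case base then show ?case by simp
next
  case (step m)
  have "3 * (real (Suc m) - 1) = 3 * (real m - 1) + 3" by simp
  also have "\<dots> \<le> 2 ^ m + 3" using step.IH by simp
  also have "\<dots> \<le> 2 ^ m + 2 ^ m"
  proof -
    have "(2::real) ^ 2 \<le> 2 ^ m" using step.hyps by (intro power_increasing) auto
    then show ?thesis by simp
  qed
  finally show ?case by simp
qed

lemma VV_final:
  assumes H: "H > 0"
  shows "VV H n 0 \<le> (1 + 1/3 * (\<Sum>m\<in>{2..n}. 2 ^ m * fact n / fact (n - m) / H ^ m)) * H ^ n"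
proof -
  define f where "f = (\<lambda>m. real (n choose m) * H^(n-m) * ee m 0)"
  have f1: "f 1 = 0" by (simp add: f_def ee_def)
  have "VV H n 0 = f 0 + (\<Sum>m\<in>{1..n}. f m)"
  proof -
    have "{..n} = insert 0 {1..n}" by auto
    then show ?thesis unfolding VV_def f_def by simp
  qed
  also have "(\<Sum>m\<in>{1..n}. f m) = (\<Sum>m\<in>{2..n}. f m)"
  proof (cases "n = 0")
    case False
    then have "{1..n} = insert 1 {2..n}" by auto
    then show ?thesis using f1 by simp
  qed simp
  finally have VVe: "VV H n 0 = f 0 + (\<Sum>m\<in>{2..n}. f m)" .
  have "(\<Sum>m\<in>{2..n}. f m) \<le> (\<Sum>m\<in>{2..n}. 1/3 * (2 ^ m * fact n / fact (n - m) / H ^ m * H ^ n))"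
  proof (intro sum_mono)
    fix m assume m: "m \<in> {2..n}"
    have mn: "m \<le> n" and m2: "m \<ge> 2" using m by auto
    have c: "real (n choose m) * fact m = fact n / fact (n - m)"
      using binomial_fact[OF mn, where 'a=real] by (simp add: field_simps)
    have p: "H ^ n / H ^ m = H ^ (n - m)" using power_diff[of H m n] H mn by simp
    have "f m = (real (n choose m) * fact m) * H^(n-m) * (real m - 1)"
      using m2 by (simp add: f_def ee_def)
    also have "\<dots> = fact n / fact (n - m) * H^(n-m) * (real m - 1)" by (simp only: c)
    also have "\<dots> \<le> fact n / fact (n - m) * H^(n-m) * (1/3 * 2 ^ m)"
      using three_le_pow[OF m2] H by (intro mult_left_mono) auto
    also have "\<dots> = 1/3 * (2 ^ m * fact n / fact (n - m) / H ^ m * H ^ n)"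
    proof -
      have hm: "H ^ m \<noteq> 0" using H by simp
      show ?thesis unfolding p[symmetric] using hm by (simp add: field_simps)
    qed
    finally show "f m \<le> 1/3 * (2 ^ m * fact n / fact (n - m) / H ^ m * H ^ n)" .
  qed
  moreover have "f 0 = H ^ n" by (simp add: f_def ee_def)
  ultimately have *: "VV H n 0 \<le> H ^ n + (\<Sum>m\<in>{2..n}. 1/3 * (2 ^ m * fact n / fact (n - m) / H ^ m * H ^ n))"
    using VVe by simp
  have "(1 + 1/3 * (\<Sum>m\<in>{2..n}. 2 ^ m * fact n / fact (n - m) / H ^ m)) * H ^ n
      = H ^ n + (\<Sum>m\<in>{2..n}. 1/3 * (2 ^ m * fact n / fact (n - m) / H ^ m * H ^ n))"
    by (simp add: distrib_right sum_distrib_left sum_distrib_right mult.assoc)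
  with * show ?thesis by simp
qed

lemma Gf_ge1: "r \<ge> 1 \<Longrightarrow> Gf k r m \<sigma> \<ge> 1"
  unfolding Gf_def
proof (intro prod_ge_1)
  fix i assume r: "r \<ge> 1"
  have "real r ^ beta_count m \<sigma> i = (\<Prod>j\<in>{0..<beta_count m \<sigma> i}. real r)" by simp
  also have "\<dots> \<le> pochhammer (real r) (beta_count m \<sigma> i)"
    unfolding pochhammer_prod by (intro prod_mono) auto
  finally show "1 \<le> pochhammer (real r) (beta_count m \<sigma> i) / real r ^ beta_count m \<sigma> i"
    using r by simp
qed

lemma fact_split: "fact (a + b) = (fact a * pochhammer (real a + 1) b :: real)"
  using pochhammer_product'[of "1::real" a b] by (simp add: pochhammer_fact add.commute)

lemma term_eq:
  assumes k: "k \<ge> 1" and r: "r \<ge> 1" and s: "\<sigma> \<in> {1..n} \<rightarrow>\<^sub>E {1..k}"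
  shows "1 / (\<Prod>j\<in>{1..n}. real (\<sigma> j)) * (fact (k*r - 1) / fact (r - 1) ^ k)
                 * (\<Prod>i\<in>{1..k}. fact (r - 1 + beta_count n \<sigma> i)) / fact (k*r + n - 1)
        = real r ^ n / (\<Prod>j\<in>{0..<n}. real (k*r + j)) * ((\<Prod>t\<in>{1..n}. 1 / real (\<sigma> t)) * Gf k r n \<sigma>)"
proof -
  have kr: "k * r \<ge> 1" using k r by (simp add: one_le_mult_iff)
  have f1: "fact (r - 1 + beta_count n \<sigma> i) = (fact (r - 1) * pochhammer (real r) (beta_count n \<sigma> i) :: real)" for i
    using fact_split[of "r - 1" "beta_count n \<sigma> i"] r by (simp add: of_nat_diff)
  have f2: "fact (k*r + n - 1) = (fact (k*r - 1) * (\<Prod>j\<in>{0..<n}. real (k*r + j)) :: real)"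
  proof -
    have "k*r + n - 1 = (k*r - 1) + n" using kr by simp
    then show ?thesis using fact_split[of "k*r - 1" n] kr by (simp add: of_nat_diff pochhammer_prod)
  qed
  have p1: "(\<Prod>i\<in>{1..k}. fact (r - 1 + beta_count n \<sigma> i)) = fact (r - 1) ^ k * (\<Prod>i\<in>{1..k}. pochhammer (real r) (beta_count n \<sigma> i) :: real)"
    unfolding f1 prod.distrib by simp
  have p2: "(\<Prod>i\<in>{1..k}. pochhammer (real r) (beta_count n \<sigma> i)) = Gf k r n \<sigma> * real r ^ n"
  proof -
    have "real r ^ n = (\<Prod>i\<in>{1..k}. real r ^ beta_count n \<sigma> i)"
      using power_sum[of "real r" "beta_count n \<sigma>" "{1..k}"] sum_beta[OF s] by simp
    then show ?thesis using r unfolding Gf_def by (simp add: prod.distrib[symmetric])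
  qed
  have p3: "(\<Prod>t\<in>{1..n}. 1 / real (\<sigma> t)) = 1 / (\<Prod>j\<in>{1..n}. real (\<sigma> j))"
    by (simp add: prod_dividef)
  have P0: "(\<Prod>j\<in>{0..<n}. real (k*r + j)) > 0"
  proof (intro prod_pos)
    fix j show "0 < real (k*r + j)" using kr by linarith
  qed
  have F0: "(fact (r - 1) :: real) ^ k > 0" "(fact (k*r-1) :: real) > 0" by auto
  show ?thesis unfolding p1 p2 p3 f2 using P0 F0 by (simp add: field_simps)
qed

lemma part_b:
  fixes k r n :: nat
  assumes k: "k \<ge> 1" and r: "r \<ge> 1"
  shows "let Q = I_krn k r n / (real r ^ n / (\<Prod>j\<in>{0..<n}. real (k*r + j)) * harm k ^ n)
         in 1 \<le> Q \<and> Q \<le> upper_bound k n"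
proof -
  define P where "P = (\<Prod>j\<in>{0..<n}. real (k*r + j))"
  define H where "H = (harm k :: real)"
  have H0: "H > 0" unfolding H_def using k by simp
  have kr: "k * r \<ge> 1" using k r by (simp add: one_le_mult_iff)
  have P0: "P > 0" unfolding P_def
  proof (intro prod_pos)
    fix j show "0 < real (k*r + j)" using kr by linarith
  qed
  define z where "z = (\<lambda>(t::nat) (v::nat). 1 / real v)"
  define A where "A = SS k r n z"
  have IA: "I_krn k r n = real r ^ n / P * A"
  proof -
    have "I_krn k r n = (\<Sum>\<sigma>\<in>{1..n} \<rightarrow>\<^sub>E {1..k}. real r ^ n / P * ((\<Prod>t\<in>{1..n}. 1 / real (\<sigma> t)) * Gf k r n \<sigma>))"
      unfolding part_a[OF k r] P_def by (intro sum.cong refl term_eq[OF k r])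
    also have "\<dots> = real r ^ n / P * A"
      by (simp add: A_def SS_def z_def sum_distrib_left)
    finally show ?thesis .
  qed
  have Hn: "H ^ n = (\<Sum>\<sigma>\<in>{1..n} \<rightarrow>\<^sub>E {1..k}. \<Prod>t\<in>{1..n}. 1 / real (\<sigma> t))"
  proof -
    have "H ^ n = (\<Prod>t\<in>{1..n}. \<Sum>v\<in>{1..k}. 1 / real v)" by (simp add: H_def harm_eq)
    also have "\<dots> = (\<Sum>\<sigma>\<in>{1..n} \<rightarrow>\<^sub>E {1..k}. \<Prod>t\<in>{1..n}. 1 / real (\<sigma> t))"
      by (rule prod_sum_PiE) auto
    finally show ?thesis .
  qed
  have lowA: "H ^ n \<le> A"
    unfolding Hn A_def SS_def z_def
  proof (intro sum_mono)
    fix \<sigma> :: "nat \<Rightarrow> nat"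
    have "0 \<le> (\<Prod>t\<in>{1..n}. 1 / real (\<sigma> t))" by (intro prod_nonneg) auto
    then show "(\<Prod>t\<in>{1..n}. 1 / real (\<sigma> t)) \<le> (\<Prod>t\<in>{1..n}. 1 / real (\<sigma> t)) * Gf k r n \<sigma>"
      using Gf_ge1[OF r] by (simp add: mult_le_cancel_left1)
  qed
  have upA: "A \<le> VV H n 0"
  proof -
    have "SS k r n z \<le> VV (harm k) (n - card ({}::nat set)) (card ({}::nat set))"
      using SS_bound[OF r, of n k] by (elim allE[of _ z] allE[of _ "{}"]) (auto simp: z_def)
    then show ?thesis unfolding A_def H_def by simp
  qed
  have ub: "VV H n 0 \<le> upper_bound k n * H ^ n"
    using VV_final[OF H0, of n] by (simp add: upper_bound_def H_def)
  have Q: "I_krn k r n / (real r ^ n / P * H ^ n) = A / H ^ n"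
    using IA P0 H0 r by (simp add: field_simps)
  have HnP: "H ^ n > 0" using H0 by simp
  show ?thesis
    unfolding Let_def P_def[symmetric] H_def[symmetric] Q
  proof -
    have "1 \<le> A / H ^ n" using lowA HnP by simp
    moreover have "A / H ^ n \<le> upper_bound k n" using upA ub HnP by (simp add: divide_le_eq)
    ultimately show "1 \<le> A / H ^ n \<and> A / H ^ n \<le> upper_bound k n" by simp
  qed
qed


lemma lnk_ge1: "k \<ge> 4 \<Longrightarrow> 1 \<le> ln (real k)"
proof -
  assume k: "k \<ge> 4"
  have "ln (4::real) = 2 * ln 2" using ln_mult[of 2 2] by simp
  then have "1 \<le> ln (4::real)" using ln2_ge_two_thirds by simp
  also have "\<dots> \<le> ln (real k)" using k by simp
  finally show ?thesis .
qed

lemma harm_le_ln1: "k \<ge> 1 \<Longrightarrow> harm k \<le> ln (real k) + (1::real)"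
  using euler_mascheroni_sequence_decreasing[of 1 k] by (simp add: harm_def)

lemma harm_ge_lnk: "ln (real k) \<le> (harm k :: real)"
proof (cases "k = 0")
  case True then show ?thesis by (simp add: harm_def)
next
  case False
  then have "ln (real k) \<le> ln (real k + 1)" by simp
  also have "\<dots> \<le> harm k" by (rule harm_ge_ln)
  finally show ?thesis .
qed

lemma em_le1: "euler_mascheroni \<le> (1::real)"
  using euler_mascheroni_bounds[of 1] ln2_ge_two_thirds by (simp add: harm_def)

lemma harm_em: assumes k: "k \<ge> 1"
  shows "\<bar>harm k - (ln (real k) + euler_mascheroni)\<bar> \<le> 1 / real k"
proof -
  define t where "t = (harm k - ln (real (Suc k)) :: real)"
  have b: "euler_mascheroni \<in> {t + inverse (real (2*(k+1)))..t + inverse (real (2*k))}"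
    using euler_mascheroni_bounds[OF k] unfolding t_def by simp
  have d0: "0 \<le> ln (real (Suc k)) - ln (real k)" using k by simp
  have d1: "ln (real (Suc k)) - ln (real k) \<le> 1 / real k"
    using ln_diff_le_inverse[of "real k"] k by (simp add: add.commute)
  have "harm k - (ln (real k) + euler_mascheroni) = (t - euler_mascheroni) + (ln (real (Suc k)) - ln (real k))"
    unfolding t_def by simp
  moreover have "t - euler_mascheroni \<ge> - (1 / (2 * real k))" using b by (simp add: inverse_eq_divide)
  moreover have "t - euler_mascheroni \<le> 0"
  proof -
    have "0 \<le> inverse (real (2*(k+1)))" by simp
    moreover have "t + inverse (real (2*(k+1))) \<le> euler_mascheroni" using b by simp
    ultimately show ?thesis by linarith
  qed
  moreover have "1 / (2 * real k) \<le> 1 / real k" using k by (simp add: field_simps)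
  ultimately show ?thesis using d0 d1 by (simp add: abs_le_iff)
qed

lemma lnsq_le: "k \<ge> 1 \<Longrightarrow> (ln (real k))^2 \<le> 4 * real k"
proof -
  assume k: "k \<ge> 1"
  define s where "s = sqrt (real k)"
  have s0: "s > 0" using k by (simp add: s_def)
  have "ln (real k) = 2 * ln s" using k by (simp add: s_def ln_sqrt)
  moreover have "ln s \<le> s - 1" using s0 by (rule ln_le_minus_one)
  moreover have "0 \<le> ln (real k)" using k by simp
  ultimately have "0 \<le> ln (real k)" "ln (real k) \<le> 2 * s" by auto
  then have "(ln (real k))^2 \<le> (2 * s)^2" by (intro power_mono) auto
  also have "\<dots> = 4 * real k" using k by (simp add: s_def power_mult_distrib)
  finally show ?thesis .
qed

lemma pow_diff_le:
  fixes a b :: real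
  assumes "0 \<le> b" "b \<le> a"
  shows "a ^ n - b ^ n \<le> real n * (a - b) * a ^ (n - 1)"
proof (induction n)
  case 0 then show ?case by simp
next
  case (Suc n)
  have "a ^ Suc n - b ^ Suc n = a * (a ^ n - b ^ n) + b ^ n * (a - b)" by (simp add: algebra_simps)
  also have "\<dots> \<le> a * (real n * (a - b) * a ^ (n - 1)) + a ^ n * (a - b)"
    using assms Suc.IH by (intro add_mono mult_left_mono mult_right_mono power_mono) auto
  also have "\<dots> = real (Suc n) * (a - b) * a ^ n"
    by (cases n) (simp_all add: algebra_simps)
  finally show ?case by simp
qed

lemma pow_diff_abs:
  fixes a b M :: real
  assumes "0 \<le> a" "0 \<le> b" "a \<le> M" "b \<le> M" "n \<ge> 1"
  shows "\<bar>a ^ n - b ^ n\<bar> \<le> real n * \<bar>a - b\<bar> * M ^ (n - 1)"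
proof (cases "b \<le> a")
  case True
  have "a ^ n - b ^ n \<le> real n * (a - b) * a ^ (n - 1)" using pow_diff_le[OF assms(2) True] .
  also have "\<dots> \<le> real n * (a - b) * M ^ (n - 1)"
    using assms True by (intro mult_left_mono power_mono) auto
  finally show ?thesis using True assms by (simp add: power_mono)
next
  case False
  have "b ^ n - a ^ n \<le> real n * (b - a) * b ^ (n - 1)" using pow_diff_le[OF assms(1)] False by simp
  also have "\<dots> \<le> real n * (b - a) * M ^ (n - 1)"
    using assms False by (intro mult_left_mono power_mono) auto
  finally show ?thesis using False assms by (simp add: power_mono abs_minus_commute)
qed


lemma ub_bound:
  assumes k: "k \<ge> 4"
  shows "0 \<le> upper_bound k n - 1 \<and> upper_bound k n - 1 \<le> (1/3 * (\<Sum>m\<in>{2..n}. 2 ^ m * fact n / fact (n - m))) / (ln (real k))^2"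
proof -
  define L where "L = ln (real k)"
  define H where "H = (harm k :: real)"
  have L1: "1 \<le> L" unfolding L_def using lnk_ge1[OF k] .
  have LH: "L \<le> H" unfolding L_def H_def by (rule harm_ge_lnk)
  define T where "T = (\<lambda>m. 2 ^ m * fact n / fact (n - m) :: real)"
  have e1: "upper_bound k n - 1 = 1/3 * (\<Sum>m\<in>{2..n}. T m / H ^ m)"
    by (simp add: upper_bound_def H_def T_def)
  have le: "(\<Sum>m\<in>{2..n}. T m / H ^ m) \<le> (\<Sum>m\<in>{2..n}. T m / L ^ 2)"
  proof (intro sum_mono)
    fix m assume m: "m \<in> {2..n}"
    have "L ^ 2 \<le> H ^ 2" using L1 LH by (intro power_mono) auto
    also have "\<dots> \<le> H ^ m" using m L1 LH by (intro power_increasing) auto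
    finally have "L ^ 2 \<le> H ^ m" .
    moreover have "0 < H ^ m * L ^ 2" using L1 LH by (intro mult_pos_pos) auto
    moreover have "0 \<le> T m" by (simp add: T_def)
    ultimately show "T m / H ^ m \<le> T m / L ^ 2"
      by (intro divide_left_mono) auto
  qed
  have s2: "(\<Sum>m\<in>{2..n}. T m / L ^ 2) = (\<Sum>m\<in>{2..n}. T m) / L ^ 2"
    by (rule sum_divide_distrib[symmetric])
  have nn: "0 \<le> (\<Sum>m\<in>{2..n}. T m / H ^ m)"
    using L1 LH by (intro sum_nonneg) (auto simp: T_def)
  have "1/3 * (\<Sum>m\<in>{2..n}. T m / H ^ m) \<le> 1/3 * ((\<Sum>m\<in>{2..n}. T m) / L ^ 2)"
    using le s2 by simp
  then have "upper_bound k n - 1 \<le> (1/3 * (\<Sum>m\<in>{2..n}. T m)) / L ^ 2"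
    using e1 by simp
  moreover have "0 \<le> upper_bound k n - 1" using e1 nn by simp
  ultimately show ?thesis unfolding L_def T_def by simp
qed

lemma P_bounds:
  fixes k r n :: nat
  assumes k: "k \<ge> 1" and r: "r \<ge> 1"
  shows "real r ^ n / (\<Prod>j\<in>{0..<n}. real (k*r + j)) \<le> 1 / real k ^ n"
    and "1 / real k ^ n - real r ^ n / (\<Prod>j\<in>{0..<n}. real (k*r + j)) \<le> real n ^ 2 / real k ^ (n+1)"
proof -
  define P where "P = (\<Prod>j\<in>{0..<n}. real (k*r + j))"
  have krn: "k * r \<ge> 1" using k r by (simp add: one_le_mult_iff)
  have kr: "real k * real r \<ge> 1" using krn by (metis of_nat_1 of_nat_le_iff of_nat_mult)
  have Pge: "(real k * real r) ^ n \<le> P"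
  proof -
    have "(real k * real r) ^ n = (\<Prod>j\<in>{0..<n}. real k * real r)" by simp
    also have "\<dots> \<le> P" unfolding P_def using kr by (intro prod_mono) auto
    finally show ?thesis .
  qed
  have Ple: "P \<le> (real k * real r + real n) ^ n"
  proof -
    have "P \<le> (\<Prod>j\<in>{0..<n}. real k * real r + real n)" unfolding P_def
      by (intro prod_mono) auto
    also have "\<dots> = (real k * real r + real n) ^ n" by simp
    finally show ?thesis .
  qed
  have "1 \<le> (real k * real r) ^ n" using kr by (rule one_le_power)
  then have P0: "P > 0" and krp: "(real k * real r) ^ n > 0" using Pge by linarith+
  have kpos: "real k > 0" using k by simp
  show "real r ^ n / (\<Prod>j\<in>{0..<n}. real (k*r + j)) \<le> 1 / real k ^ n"
  proof -
    have "real r ^ n / P \<le> real r ^ n / (real k * real r) ^ n"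
      using Pge P0 krp by (intro divide_left_mono mult_pos_pos) auto
    also have "\<dots> = 1 / real k ^ n" using r kpos by (simp add: power_mult_distrib)
    finally show ?thesis unfolding P_def .
  qed
  have low: "1 / (real k + real n) ^ n \<le> real r ^ n / P"
  proof -
    have "1 / (real k + real n) ^ n = (1 / (real k + real n)) ^ n" by (simp add: power_divide)
    also have "\<dots> \<le> (real r / (real k * real r + real n)) ^ n"
    proof (intro power_mono)
      have "real k * real r + real n \<le> real r * (real k + real n)"
      proof -
        have "real n * 1 \<le> real n * real r" using r by (intro mult_left_mono) auto
        then show ?thesis by (simp add: algebra_simps)
      qed
      then show "1 / (real k + real n) \<le> real r / (real k * real r + real n)"
        using kpos kr by (simp add: field_simps)
    qed (use kpos in auto)
    also have "\<dots> = real r ^ n / (real k * real r + real n) ^ n" by (simp add: power_divide)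
    also have "\<dots> \<le> real r ^ n / P" using Ple P0 by (intro divide_left_mono) auto
    finally show ?thesis .
  qed
  define a where "a = real k + real n"
  define b where "b = real k"
  have b0: "b > 0" and ab: "b \<le> a" and a0: "a > 0" using kpos by (auto simp: a_def b_def)
  have "1 / b ^ n - 1 / a ^ n = (a ^ n - b ^ n) / (a ^ n * b ^ n)"
    using a0 b0 by (simp add: field_simps)
  also have "\<dots> \<le> (real n * (a - b) * a ^ (n - 1)) / (a ^ n * b ^ n)"
    using pow_diff_le[of b a n] b0 ab a0 by (intro divide_right_mono) auto
  also have "\<dots> \<le> real n ^ 2 / b ^ (n+1)"
  proof (cases n)
    case 0 then show ?thesis by simp
  next
    case (Suc n')
    have "a - b = real n" by (simp add: a_def b_def)
    have an: "a ^ n = a * a ^ (n-1)" using Suc by simp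
    have "(real n * (a - b) * a ^ (n - 1)) / (a ^ n * b ^ n) = (real n ^ 2 * a ^ (n-1)) / ((a * b ^ n) * a ^ (n-1))"
      unfolding an \<open>a - b = real n\<close> by (simp add: power2_eq_square mult_ac)
    also have "\<dots> = real n ^ 2 / (a * b ^ n)"
      using a0 by (intro nonzero_mult_divide_mult_cancel_right) simp
    finally have "(real n * (a - b) * a ^ (n - 1)) / (a ^ n * b ^ n) = real n ^ 2 / (a * b ^ n)" .
    also have "\<dots> \<le> real n ^ 2 / (b * b ^ n)"
      using ab b0 by (intro divide_left_mono mult_right_mono) auto
    finally show ?thesis by simp
  qed
  finally have "1 / b ^ n - 1 / a ^ n \<le> real n ^ 2 / b ^ (n+1)" .
  then show "1 / real k ^ n - real r ^ n / (\<Prod>j\<in>{0..<n}. real (k*r + j)) \<le> real n ^ 2 / real k ^ (n+1)"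
    using low unfolding P_def a_def b_def by linarith
qed


lemma c_main:
  fixes k r n :: nat
  assumes k: "k \<ge> 4" and r: "r \<ge> 1" and n: "n \<ge> 1"
  defines "L \<equiv> ln (real k)"
  defines "C0 \<equiv> 1/3 * (\<Sum>m\<in>{2..n}. 2 ^ m * fact n / fact (n - m)) :: real"
  shows "\<bar>I_krn k r n - harm k ^ n / real k ^ n\<bar> \<le> (C0 * 2^n + 4 * real n ^ 2 * 2^n) * (L ^ n / L ^ 2 / real k ^ n)"
    and "\<bar>I_krn k r n - (L + euler_mascheroni) ^ n / real k ^ n\<bar>
         \<le> (C0 * 2^n + 4 * real n ^ 2 * 2^n + real n * 2^n) * (L ^ n / L ^ 2 / real k ^ n)"
proof -
  have k1: "k \<ge> 1" using k by simp
  define H where "H = (harm k :: real)"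
  define R where "R = real r ^ n / (\<Prod>j\<in>{0..<n}. real (k*r + j))"
  define D where "D = R * H ^ n"
  define X where "X = L ^ n / L ^ 2 / real k ^ n"
  have L1: "1 \<le> L" unfolding L_def using lnk_ge1[OF k] .
  have LH: "L \<le> H" unfolding L_def H_def by (rule harm_ge_lnk)
  have H2L: "H \<le> 2 * L" using harm_le_ln1[OF k1] L1 unfolding H_def L_def by linarith
  have kpos: "real k > 0" using k by simp
  have X0: "X \<ge> 0" unfolding X_def using L1 by simp
  have Lk: "L \<le> real k" unfolding L_def using ln_le_minus_one[of "real k"] kpos by simp
  have L2k: "L ^ 2 \<le> 4 * real k" unfolding L_def using lnsq_le[OF k1] .
  have R1: "R \<le> 1 / real k ^ n" unfolding R_def by (rule P_bounds(1)[OF k1 r])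
  have R2: "1 / real k ^ n - R \<le> real n ^ 2 / real k ^ (n+1)" unfolding R_def by (rule P_bounds(2)[OF k1 r])
  have Rpos: "R > 0"
  proof -
    have "(\<Prod>j\<in>{0..<n}. real (k*r + j)) > 0"
    proof (intro prod_pos)
      fix j have "0 < k*r + j" using k r by simp
      then show "0 < real (k*r + j)" by (simp only: of_nat_0_less_iff)
    qed
    then show ?thesis unfolding R_def using r by simp
  qed
  have Hpos: "H > 0" using L1 LH by simp
  have Dpos: "D > 0" unfolding D_def using Rpos Hpos by simp
  define Q where "Q = I_krn k r n / D"
  have Qb: "1 \<le> Q \<and> Q \<le> upper_bound k n"
    using part_b[OF k1 r, of n] unfolding Q_def D_def R_def H_def Let_def by simp
  have IQ: "I_krn k r n = Q * D" unfolding Q_def using Dpos by simp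
  have ub: "upper_bound k n - 1 \<le> C0 / L ^ 2" using ub_bound[OF k, of n] unfolding C0_def L_def by simp
  have Hn: "H ^ n \<le> 2 ^ n * L ^ n"
  proof -
    have "H ^ n \<le> (2 * L) ^ n" using Hpos H2L by (intro power_mono) auto
    then show ?thesis by (simp add: power_mult_distrib)
  qed
  have C00: "C0 \<ge> 0" unfolding C0_def by (intro mult_nonneg_nonneg sum_nonneg) auto
  have A1: "\<bar>I_krn k r n - D\<bar> \<le> C0 * 2^n * X"
  proof -
    have "\<bar>I_krn k r n - D\<bar> = (Q - 1) * D" using IQ Qb Dpos by (simp add: algebra_simps)
    also have "\<dots> \<le> (C0 / L ^ 2) * D" using Qb ub Dpos by (intro mult_right_mono) auto
    also have "D \<le> H ^ n / real k ^ n" unfolding D_def using R1 Hpos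
      by (metis divide_inverse_commute inverse_eq_divide mult_right_mono order_less_imp_le zero_less_power)
    then have "(C0 / L ^ 2) * D \<le> (C0 / L ^ 2) * (H ^ n / real k ^ n)"
      using C00 L1 by (intro mult_left_mono) auto
    also have "\<dots> \<le> (C0 / L ^ 2) * (2 ^ n * L ^ n / real k ^ n)"
      using C00 L1 Hn kpos by (intro mult_left_mono divide_right_mono) auto
    also have "\<dots> = C0 * 2^n * X" unfolding X_def by (simp add: field_simps)
    finally show ?thesis .
  qed
  have A2: "\<bar>D - H ^ n / real k ^ n\<bar> \<le> 4 * real n ^ 2 * 2^n * X"
  proof -
    have le: "R * H ^ n \<le> (1 / real k ^ n) * H ^ n" using R1 Hpos by (intro mult_right_mono) auto
    have "\<bar>D - H ^ n / real k ^ n\<bar> = (1 / real k ^ n) * H ^ n - R * H ^ n"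
      unfolding D_def using le by simp
    also have "\<dots> = H ^ n * (1 / real k ^ n - R)" by (simp add: algebra_simps)
    finally have "\<bar>D - H ^ n / real k ^ n\<bar> = H ^ n * (1 / real k ^ n - R)" .
    also have "\<dots> \<le> (2 ^ n * L ^ n) * (real n ^ 2 / real k ^ (n+1))"
      using Hn R2 R1 Hpos L1 by (intro mult_mono) auto
    also have "\<dots> = (2 ^ n * L ^ n * real n ^ 2 / real k ^ n) * (1 / real k)"
      by (simp add: field_simps)
    also have "\<dots> \<le> (2 ^ n * L ^ n * real n ^ 2 / real k ^ n) * (4 / L ^ 2)"
      using L2k L1 kpos by (intro mult_left_mono) (auto simp: field_simps)
    also have "\<dots> = 4 * real n ^ 2 * 2^n * X" unfolding X_def by (simp add: field_simps)
    finally show ?thesis .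
  qed
  have main: "\<bar>I_krn k r n - H ^ n / real k ^ n\<bar> \<le> (C0 * 2^n + 4 * real n ^ 2 * 2^n) * X"
    using A1 A2 by (simp add: algebra_simps)
  then show "\<bar>I_krn k r n - harm k ^ n / real k ^ n\<bar> \<le> (C0 * 2^n + 4 * real n ^ 2 * 2^n) * (L ^ n / L ^ 2 / real k ^ n)"
    unfolding H_def X_def .
  define G where "G = L + euler_mascheroni"
  have G0: "0 \<le> G" unfolding G_def using L1 euler_mascheroni_pos by simp
  have G2L: "G \<le> 2 * L" unfolding G_def using L1 em_le1 by simp
  have HG: "\<bar>H - G\<bar> \<le> 1 / real k" unfolding H_def G_def L_def using harm_em[OF k1] .
  have A3: "\<bar>H ^ n / real k ^ n - G ^ n / real k ^ n\<bar> \<le> real n * 2^n * X"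
  proof -
    have "\<bar>H ^ n - G ^ n\<bar> \<le> real n * \<bar>H - G\<bar> * (2 * L) ^ (n - 1)"
      using Hpos G0 H2L G2L n by (intro pow_diff_abs) auto
    also have "\<dots> \<le> real n * (1 / real k) * (2 * L) ^ (n - 1)"
      using HG L1 by (intro mult_right_mono mult_left_mono) auto
    finally have d: "\<bar>H ^ n - G ^ n\<bar> \<le> real n * (1 / real k) * (2 * L) ^ (n - 1)" .
    have "\<bar>H ^ n / real k ^ n - G ^ n / real k ^ n\<bar> = \<bar>H ^ n - G ^ n\<bar> / real k ^ n"
      using kpos by (simp add: diff_divide_distrib[symmetric])
    also have "\<dots> \<le> real n * (1 / real k) * (2 * L) ^ (n - 1) / real k ^ n"
      using d kpos by (intro divide_right_mono) auto
    also have "\<dots> = real n * 2 ^ (n-1) * (L ^ n / L ^ 2 / real k ^ n) * (L / real k)"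
    proof -
      have "L ^ n = L * L ^ (n - 1)" using n by (cases n) auto
      then show ?thesis using L1 kpos by (simp add: field_simps power2_eq_square power_mult_distrib)
    qed
    also have "\<dots> \<le> real n * 2 ^ (n-1) * (L ^ n / L ^ 2 / real k ^ n) * 1"
      using Lk kpos X0 L1 by (intro mult_left_mono) (auto simp: X_def)
    also have "\<dots> \<le> real n * 2 ^ n * X"
    proof -
      have p: "(2::real)^(n-1) \<le> 2^n" by (rule power_increasing) auto
      have "real n * 2^(n-1) \<le> real n * (2::real)^n" using p by (intro mult_left_mono) auto
      then show ?thesis unfolding X_def[symmetric] using X0 by (simp add: mult_right_mono)
    qed
    finally show ?thesis .
  qed
  show "\<bar>I_krn k r n - (L + euler_mascheroni) ^ n / real k ^ n\<bar>
         \<le> (C0 * 2^n + 4 * real n ^ 2 * 2^n + real n * 2^n) * (L ^ n / L ^ 2 / real k ^ n)"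
    using main A3 unfolding G_def[symmetric] X_def[symmetric] by (simp add: algebra_simps)
qed


lemma powr_L: "(L::real) > 0 \<Longrightarrow> L powr (real n - 2) = L ^ n / L ^ 2"
  by (simp add: powr_diff powr_realpow)

lemma powr_L2: "(L::real) > 0 \<Longrightarrow> L powr (-2::real) = 1 / L ^ 2"
  by (simp add: powr_minus_divide powr_realpow)

lemma evk4: "eventually (\<lambda>k::nat. k \<ge> 4) at_top"
  by (rule eventually_ge_at_top)

lemma part_c1: "(\<lambda>k. upper_bound k n - 1) \<in> O(\<lambda>k. ln (real k) powr (-2))"
proof (rule bigoI[where c = "1/3 * (\<Sum>m\<in>{2..n}. 2 ^ m * fact n / fact (n - m))"])
  show "eventually (\<lambda>k. norm (upper_bound k n - 1) \<le> 1/3 * (\<Sum>m\<in>{2..n}. 2 ^ m * fact n / fact (n - m)) * norm (ln (real k) powr (-2))) at_top"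
    using evk4
  proof eventually_elim
    case (elim k)
    have L1: "1 \<le> ln (real k)" using lnk_ge1[OF elim] .
    have "norm (ln (real k) powr (-2)) = 1 / (ln (real k))^2" using L1 by (simp add: powr_L2)
    note eq = this
    define C0 where "C0 = 1/3 * (\<Sum>m\<in>{2..n}. 2 ^ m * fact n / fact (n - m) :: real)"
    have h: "0 \<le> upper_bound k n - 1" "upper_bound k n - 1 \<le> C0 / (ln (real k))^2"
      using ub_bound[OF elim, of n] unfolding C0_def by auto
    have n1: "norm (upper_bound k n - 1) = upper_bound k n - 1" using h(1) by simp
    have "C0 * (1 / (ln (real k))^2) = C0 / (ln (real k))^2" by simp
    then show ?case unfolding n1 eq C0_def[symmetric] using h(2) by linarith
  qed
qed

lemma part_c2:
  assumes r: "r \<ge> 1" and n: "n \<ge> 1"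
  shows "(\<lambda>k. I_krn k r n - harm k ^ n / real k ^ n) \<in> O(\<lambda>k. ln (real k) powr (real n - 2) / real k ^ n)"
proof (rule bigoI[where c = "(1/3 * (\<Sum>m\<in>{2..n}. 2 ^ m * fact n / fact (n - m))) * 2^n + 4 * real n ^ 2 * 2^n"])
  show "eventually (\<lambda>k. norm (I_krn k r n - harm k ^ n / real k ^ n) \<le> ((1/3 * (\<Sum>m\<in>{2..n}. 2 ^ m * fact n / fact (n - m))) * 2^n + 4 * real n ^ 2 * 2^n) * norm (ln (real k) powr (real n - 2) / real k ^ n)) at_top"
    using evk4
  proof eventually_elim
    case (elim k)
    have L1: "1 \<le> ln (real k)" using lnk_ge1[OF elim] .
    have "norm (ln (real k) powr (real n - 2) / real k ^ n) = (ln (real k)) ^ n / (ln (real k))^2 / real k ^ n"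
      using L1 by (simp add: powr_L)
    then show ?case unfolding real_norm_def using c_main(1)[OF elim r n] by (simp only:)
  qed
qed

lemma part_c3:
  assumes r: "r \<ge> 1" and n: "n \<ge> 1"
  shows "(\<lambda>k. I_krn k r n - (ln (real k) + euler_mascheroni) ^ n / real k ^ n) \<in> O(\<lambda>k. ln (real k) powr (real n - 2) / real k ^ n)"
proof (rule bigoI[where c = "(1/3 * (\<Sum>m\<in>{2..n}. 2 ^ m * fact n / fact (n - m))) * 2^n + 4 * real n ^ 2 * 2^n + real n * 2^n"])
  show "eventually (\<lambda>k. norm (I_krn k r n - (ln (real k) + euler_mascheroni) ^ n / real k ^ n) \<le> ((1/3 * (\<Sum>m\<in>{2..n}. 2 ^ m * fact n / fact (n - m))) * 2^n + 4 * real n ^ 2 * 2^n + real n * 2^n) * norm (ln (real k) powr (real n - 2) / real k ^ n)) at_top"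
    using evk4
  proof eventually_elim
    case (elim k)
    have L1: "1 \<le> ln (real k)" using lnk_ge1[OF elim] .
    have "norm (ln (real k) powr (real n - 2) / real k ^ n) = (ln (real k)) ^ n / (ln (real k))^2 / real k ^ n"
      using L1 by (simp add: powr_L)
    then show ?case unfolding real_norm_def using c_main(2)[OF elim r n] by (simp only:)
  qed
qed


theorem lemma2p20:
  fixes r n :: nat
  assumes "r \<ge> 1" and "n \<ge> 1"
  shows "(\<forall>k\<ge>1.
            I_krn k r n =
              (\<Sum>s\<in>{1..n} \<rightarrow>\<^sub>E {1..k}.
                 1 / (\<Prod>j\<in>{1..n}. real (s j)) * (fact (k*r - 1) / fact (r - 1) ^ k)
                 * (\<Prod>i\<in>{1..k}. fact (r - 1 + beta_count n s i)) / fact (k*r + n - 1)))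
       \<and> (\<forall>k\<ge>1.
            let Q = I_krn k r n /
                      (real r ^ n / (\<Prod>j\<in>{0..<n}. real (k*r + j)) * harm k ^ n)
            in 1 \<le> Q \<and> Q \<le> upper_bound k n)
       \<and> (\<lambda>k. upper_bound k n - 1) \<in> O(\<lambda>k. ln (real k) powr (-2))
       \<and> (\<lambda>k. I_krn k r n - harm k ^ n / real k ^ n)
            \<in> O(\<lambda>k. ln (real k) powr (real n - 2) / real k ^ n)
       \<and> (\<lambda>k. I_krn k r n - (ln (real k) + euler_mascheroni) ^ n / real k ^ n)
            \<in> O(\<lambda>k. ln (real k) powr (real n - 2) / real k ^ n)"
  using part_a[OF _ assms(1)] part_b[OF _ assms(1)] part_c1 part_c2[OF assms] part_c3[OF assms]
  by blast

end
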